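(* Let $p$ be an odd prime, $\tilde\lambda$ a self-conjugate partition, $\varepsilon\in\{0,1\}$, and $m$ a residue modulo $p$ such that $m=0$ if $\varepsilon=0$. Then there exists a unique self-conjugate partition $\lambda$ such that (i) $a^*_\lambda\equiv\varepsilon \pmod 2$; (ii) $r^*_\lambda-\varepsilon^*_\lambda\equiv m\pmod p$; and (iii) $\lambda^{(1)*}=\tilde\lambda$. Moreover, if $\tilde\lambda$ is a BG-partition and, in case $\varepsilon=1$, $p\nmid 2m+1$, then $\lambda$ is a BG-partition.
   Context: Partitions: $\lambda=(\lambda_1\ge\lambda_2\ge\cdots)$ with finitely many nonzero parts; $l(\lambda)$ = number of nonzero parts; Young diagram $[\lambda]=\{(i,j): i\ge1, 1\le j\le\lambda_i\}$ ($i$ = row, increasing downward). $\lambda'$ is the conjugate; self-conjugate means $\lambda=\lambda'$. $k(\lambda)=\max\{i:\lambda_i\ge i\}$; hook length $h_{ij}=\lambda_i+\lambda'_j-i-j+1$. A BG-partition is a self-conjugate partition with $p\nmid h_{ii}$ for all $1\le i\le k(\lambda)$. Rim and $p$-rim: the rim is the set of nodes $(i,j)\in[\lambda]$ with $(i+1,j+1)\notin[\lambda]$. Label rim nodes $1,2,\dots$ along the rim path from $(1,\lambda_1)$ to $(l(\lambda),1)$. The first $p$-segment is the rim nodes labelled $1,\dots,p$ (or all if fewer). If the last node $(i,j)$ of a $p$-segment lies in the last row, stop; otherwise with $l$ the smallest label in row $i+1$ the next $p$-segment is the rim nodes labelled $l,\dots,l+p-1$ (or up to the last). The $p$-rim is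 the union of the $p$-segments. $p$-rim*: for nonempty self-conjugate $\lambda$, $U_\lambda=\{(i,j)\in p\text{-rim of }\lambda: i\le j\}$, $L_\lambda=\{(j,i):(i,j)\in U_\lambda\}$, $\mathrm{Rim}^*_p(\lambda)=U_\lambda\cup L_\lambda$, $a^*_\lambda=\#\mathrm{Rim}^*_p(\lambda)$, $r^*_\lambda=\#U_\lambda$, $\varepsilon^*_\lambda=a^*_\lambda\bmod 2$. $\lambda^{(1)*}$ denotes the (self-conjugate) partition whose diagram is $[\lambda]\setminus\mathrm{Rim}^*_p(\lambda)$. *)

theory Defs
  imports "HOL-Computational_Algebra.Primes" "HOL-Number_Theory.Cong"
begin

text \<open>A partition is represented by its Young diagram: a finite set of nodes (i,j),
  i = row (from 1, increasing downward), j = column (from 1).\<close>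

type_synonym diagram = "(nat \<times> nat) set"

definition young :: "diagram \<Rightarrow> bool" where
  "young D \<longleftrightarrow> finite D \<and> (\<forall>(i,j)\<in>D. 1 \<le> i \<and> 1 \<le> j) \<and>
     (\<forall>i j i' j'. (i,j) \<in> D \<and> 1 \<le> i' \<and> i' \<le> i \<and> 1 \<le> j' \<and> j' \<le> j \<longrightarrow> (i',j') \<in> D)"

definition row_len :: "diagram \<Rightarrow> nat \<Rightarrow> nat" where
  "row_len D i = card {j. (i,j) \<in> D}"

definition col_len :: "diagram \<Rightarrow> nat \<Rightarrow> nat" where
  "col_len D j = card {i. (i,j) \<in> D}"

definition num_rows :: "diagram \<Rightarrow> nat" where
  "num_rows D = card {i. \<exists>j. (i,j) \<in> D}"

definition conjugate :: "diagram \<Rightarrow> diagram" where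
  "conjugate D = {(j,i) | i j. (i,j) \<in> D}"

definition self_conjugate :: "diagram \<Rightarrow> bool" where
  "self_conjugate D \<longleftrightarrow> conjugate D = D"

definition kdiag :: "diagram \<Rightarrow> nat" where
  "kdiag D = Max ({0} \<union> {i. 1 \<le> i \<and> i \<le> row_len D i})"

definition hook :: "diagram \<Rightarrow> nat \<Rightarrow> nat \<Rightarrow> int" where
  "hook D i j = int (row_len D i) + int (col_len D j) - int i - int j + 1"

definition BG_partition :: "nat \<Rightarrow> diagram \<Rightarrow> bool" where
  "BG_partition p D \<longleftrightarrow> self_conjugate D \<and>
     (\<forall>i. 1 \<le> i \<and> i \<le> kdiag D \<longrightarrow> \<not> int p dvd hook D i i)"

definition rim :: "diagram \<Rightarrow> diagram" where
  "rim D = {(i,j). (i,j) \<in> D \<and> (i+1, j+1) \<notin> D}"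

text \<open>Label of a rim node along the rim path from (1,lambda_1) to (l,1):
  the path runs through the rows top to bottom and, within a row, right to left.\<close>
definition rim_label :: "diagram \<Rightarrow> nat \<times> nat \<Rightarrow> nat" where
  "rim_label D x = card {y \<in> rim D. fst y < fst x \<or> (fst y = fst x \<and> snd y > snd x)} + 1"

definition pseg :: "diagram \<Rightarrow> nat \<Rightarrow> nat \<Rightarrow> diagram" where
  "pseg D p s = {x \<in> rim D. s \<le> rim_label D x \<and> rim_label D x \<le> s + p - 1}"

inductive pseg_start :: "diagram \<Rightarrow> nat \<Rightarrow> nat \<Rightarrow> bool" for D p where
  first: "pseg_start D p 1"
| step: "\<lbrakk> pseg_start D p s; x \<in> pseg D p s; \<forall>y\<in>pseg D p s. rim_label D y \<le> rim_label D x;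
           fst x \<noteq> num_rows D \<rbrakk>
         \<Longrightarrow> pseg_start D p (Min (rim_label D ` {y \<in> rim D. fst y = fst x + 1}))"

definition prim :: "diagram \<Rightarrow> nat \<Rightarrow> diagram" where
  "prim D p = \<Union> {pseg D p s | s. pseg_start D p s}"

definition U_star :: "diagram \<Rightarrow> nat \<Rightarrow> diagram" where
  "U_star D p = {(i,j). (i,j) \<in> prim D p \<and> i \<le> j}"

definition rim_star :: "diagram \<Rightarrow> nat \<Rightarrow> diagram" where
  "rim_star D p = U_star D p \<union> {(j,i) | i j. (i,j) \<in> U_star D p}"

definition a_star :: "diagram \<Rightarrow> nat \<Rightarrow> nat" where
  "a_star D p = card (rim_star D p)"

definition r_star :: "diagram \<Rightarrow> nat \<Rightarrow> nat" where
  "r_star D p = card (U_star D p)"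

definition eps_star :: "diagram \<Rightarrow> nat \<Rightarrow> nat" where
  "eps_star D p = a_star D p mod 2"

definition lam1_star :: "diagram \<Rightarrow> nat \<Rightarrow> diagram" where
  "lam1_star D p = D - rim_star D p"

end

theory Submission
  imports Defs
begin


definition has_nxt :: "nat \<Rightarrow> nat set \<Rightarrow> nat \<Rightarrow> bool" where
  "has_nxt p M X \<longleftrightarrow> (\<exists>Y\<in>M. Y + p \<le> X)"
definition nxt :: "nat \<Rightarrow> nat set \<Rightarrow> nat \<Rightarrow> nat" where
  "nxt p M X = (if has_nxt p M X then Max {Y\<in>M. Y + p \<le> X} else X)"
definition dseq :: "nat \<Rightarrow> nat set \<Rightarrow> nat \<Rightarrow> nat" where
  "dseq p M j = (nxt p M ^^ j) (Max M)"
definition Ch :: "nat \<Rightarrow> nat set \<Rightarrow> nat set" where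
  "Ch p M = (if M = {} then {} else range (dseq p M))"
definition Fm :: "nat \<Rightarrow> nat set \<Rightarrow> nat set" where
  "Fm p M = (M - Ch p M) \<union> {X - p | X. X \<in> Ch p M \<and> p < X}"
definition Cc :: "nat \<Rightarrow> nat set \<Rightarrow> nat set" where
  "Cc p M = {c. \<exists>X\<in>Ch p M. c < X \<and> X \<le> c + p}"

lemma nxt_props:
  assumes "finite M" "has_nxt p M X"
  shows "nxt p M X \<in> M" "nxt p M X + p \<le> X" "\<And>Y. Y \<in> M \<Longrightarrow> Y + p \<le> X \<Longrightarrow> Y \<le> nxt p M X"
proof -
  have fin: "finite {Y\<in>M. Y + p \<le> X}" using assms(1) by simp
  have ne: "{Y\<in>M. Y + p \<le> X} \<noteq> {}" using assms(2) unfolding has_nxt_def by auto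
  have "Max {Y\<in>M. Y + p \<le> X} \<in> {Y\<in>M. Y + p \<le> X}" using Max_in[OF fin ne] .
  then show "nxt p M X \<in> M" "nxt p M X + p \<le> X" using assms(2) unfolding nxt_def by auto
  show "\<And>Y. Y \<in> M \<Longrightarrow> Y + p \<le> X \<Longrightarrow> Y \<le> nxt p M X"
    using assms(2) fin unfolding nxt_def by auto
qed

lemma nxt_le: "finite M \<Longrightarrow> nxt p M X \<le> X"
  using nxt_props(2)[of M p X] by (auto simp: nxt_def)

lemma dseq_Suc: "dseq p M (Suc j) = nxt p M (dseq p M j)"
  by (simp add: dseq_def)

lemma dseq_0: "dseq p M 0 = Max M"
  by (simp add: dseq_def)

lemma dseq_antimono: "finite M \<Longrightarrow> i \<le> j \<Longrightarrow> dseq p M j \<le> dseq p M i"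
proof (induction j)
  case 0 then show ?case by simp
next
  case (Suc j)
  then show ?case
    using nxt_le[of M p "dseq p M j"] by (cases "i = Suc j") (auto simp: dseq_Suc)
qed

lemma dseq_in: "finite M \<Longrightarrow> M \<noteq> {} \<Longrightarrow> dseq p M j \<in> M"
proof (induction j)
  case 0 then show ?case by (simp add: dseq_0)
next
  case (Suc j) then show ?case
    using nxt_props(1)[of M p "dseq p M j"] by (auto simp: dseq_Suc nxt_def)
qed

lemma Ch_sub: "finite M \<Longrightarrow> Ch p M \<subseteq> M"
  using dseq_in unfolding Ch_def by auto

lemma Ch_finite: "finite M \<Longrightarrow> finite (Ch p M)"
  using Ch_sub[of M p] finite_subset by auto

lemma Max_in_Ch: "finite M \<Longrightarrow> M \<noteq> {} \<Longrightarrow> Max M \<in> Ch p M"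
  unfolding Ch_def by (metis UNIV_I dseq_0 image_eqI)

lemma Ch_ne: "finite M \<Longrightarrow> M \<noteq> {} \<Longrightarrow> Ch p M \<noteq> {}"
  using Max_in_Ch by blast

lemma Ch_empty: "Ch p {} = {}" by (simp add: Ch_def)

lemma Ch_le_Max: "finite M \<Longrightarrow> X \<in> Ch p M \<Longrightarrow> X \<le> Max M"
  using Ch_sub by (meson Max_ge subsetD)

lemma Max_Ch: "finite M \<Longrightarrow> M \<noteq> {} \<Longrightarrow> Max (Ch p M) = Max M"
proof -
  assume a: "finite M" "M \<noteq> {}"
  show ?thesis
  proof (rule antisym)
    show "Max (Ch p M) \<le> Max M" using Ch_le_Max[OF a(1)] Ch_ne[OF a] Ch_finite[OF a(1)] by (intro Max.boundedI) auto
    show "Max M \<le> Max (Ch p M)" using Max_in_Ch[OF a] Ch_finite[OF a(1)] by (intro Max_ge) auto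
  qed
qed

lemma Ch_between:
  assumes "finite M" "X \<in> Ch p M" "has_nxt p M X" "Z \<in> Ch p M"
  shows "Z \<le> nxt p M X \<or> X \<le> Z"
proof -
  from assms obtain j where j: "X = dseq p M j" by (auto simp: Ch_def split: if_splits)
  from assms obtain i where i: "Z = dseq p M i" by (auto simp: Ch_def split: if_splits)
  show ?thesis
  proof (cases "i \<le> j")
    case True then show ?thesis using dseq_antimono[OF assms(1) True, of p] i j by auto
  next
    case False
    then have "Suc j \<le> i" by simp
    from dseq_antimono[OF assms(1) this, of p] show ?thesis using i j by (simp add: dseq_Suc)
  qed
qed

lemma nxt_in_Ch: "finite M \<Longrightarrow> X \<in> Ch p M \<Longrightarrow> nxt p M X \<in> Ch p M"
proof -
  assume "X \<in> Ch p M"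
  then obtain j where "X = dseq p M j" "M \<noteq> {}" unfolding Ch_def by (auto split: if_splits)
  then have "nxt p M X = dseq p M (Suc j)" by (simp add: dseq_Suc)
  then show ?thesis unfolding Ch_def using \<open>M \<noteq> {}\<close> by simp
qed

lemma Min_Ch_in: "finite M \<Longrightarrow> M \<noteq> {} \<Longrightarrow> Min (Ch p M) \<in> Ch p M"
  by (rule Min_in[OF Ch_finite Ch_ne])

lemma nxt_less: "finite M \<Longrightarrow> 0 < p \<Longrightarrow> has_nxt p M X \<Longrightarrow> nxt p M X < X"
  using nxt_props(2)[of M p X] by simp

lemma Min_Ch_no_nxt:
  assumes "finite M" "M \<noteq> {}" "0 < p"
  shows "\<not> has_nxt p M (Min (Ch p M))"
proof
  assume h: "has_nxt p M (Min (Ch p M))"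
  have "Min (Ch p M) \<in> Ch p M" using Min_Ch_in assms by blast
  then have "nxt p M (Min (Ch p M)) \<in> Ch p M" using nxt_in_Ch assms by blast
  then have "Min (Ch p M) \<le> nxt p M (Min (Ch p M))" using Ch_finite assms by simp
  with nxt_less[OF assms(1,3) h] show False by simp
qed

lemma no_nxt_is_Min:
  assumes "finite M" "X \<in> Ch p M" "\<not> has_nxt p M X"
  shows "X = Min (Ch p M)"
proof -
  from assms obtain j where j: "X = dseq p M j" and ne: "M \<noteq> {}" by (auto simp: Ch_def split: if_splits)
  have stab: "dseq p M (j + k) = X" for k
    by (induction k) (use assms(3) j in \<open>auto simp: dseq_Suc nxt_def\<close>)
  have "\<forall>Z\<in>Ch p M. X \<le> Z"
  proof
    fix Z assume "Z \<in> Ch p M"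
    then obtain i where i: "Z = dseq p M i" by (auto simp: Ch_def split: if_splits)
    show "X \<le> Z"
    proof (cases "i \<le> j")
      case True then show ?thesis using dseq_antimono[OF assms(1) True, of p] i j by auto
    next
      case False then obtain k where "i = j + k" by (metis le_add_diff_inverse nat_le_linear)
      then show ?thesis using stab i by simp
    qed
  qed
  moreover have fin: "finite (Ch p M)" using Ch_finite assms(1) .
  ultimately show ?thesis using assms(2)
    by (intro antisym Min.boundedI Min.coboundedI) auto
qed

lemma has_nxt_gt:
  assumes "0 \<notin> M" "has_nxt p M X" shows "p < X"
proof -
  obtain Y where "Y \<in> M" "Y + p \<le> X" using assms(2) unfolding has_nxt_def by blast
  moreover have "Y \<noteq> 0" using assms(1) \<open>Y \<in> M\<close> by metis
  ultimately show ?thesis by linarith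
qed

lemma Ch_nonmin_gt:
  assumes "finite M" "0 \<notin> M" "X \<in> Ch p M" "X \<noteq> Min (Ch p M)"
  shows "p < X"
  using no_nxt_is_Min[OF assms(1,3)] assms has_nxt_gt by blast

lemma Ch_sub_p:
  assumes "finite M" "X \<in> Ch p M" "p < X" "X - p \<in> M"
  shows "X - p \<in> Ch p M"
proof -
  have h: "has_nxt p M X" using assms unfolding has_nxt_def by (intro bexI[of _ "X - p"]) auto
  have "nxt p M X = X - p"
  proof (rule antisym)
    show "nxt p M X \<le> X - p" using nxt_props(2)[OF assms(1) h] by linarith
    show "X - p \<le> nxt p M X" using nxt_props(3)[OF assms(1) h, of "X - p"] assms(3,4) by simp
  qed
  then show ?thesis using nxt_in_Ch[OF assms(1,2)] by simp
qed

lemma Ch_pred_exists: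
  assumes "finite M" "X \<in> Ch p M" "X \<noteq> Max M"
  shows "\<exists>W\<in>Ch p M. has_nxt p M W \<and> nxt p M W = X"
proof -
  from assms obtain j where j: "dseq p M j = X" and ne: "M \<noteq> {}" by (auto simp: Ch_def split: if_splits)
  define j0 where "j0 = (LEAST j. dseq p M j = X)"
  have j0: "dseq p M j0 = X" unfolding j0_def using j by (rule LeastI)
  have "j0 \<noteq> 0"
  proof
    assume "j0 = 0" then show False using j0 assms(3) by (simp add: dseq_0)
  qed
  then obtain i where i: "j0 = Suc i" by (cases j0) auto
  have ne2: "dseq p M i \<noteq> X"
  proof
    assume "dseq p M i = X"
    then have "j0 \<le> i" unfolding j0_def by (rule Least_le)
    with i show False by simp
  qed
  have "nxt p M (dseq p M i) = X" using j0 i by (simp add: dseq_Suc)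
  moreover have "has_nxt p M (dseq p M i)" using calculation ne2 by (auto simp: nxt_def split: if_splits)
  moreover have "dseq p M i \<in> Ch p M" using ne by (simp add: Ch_def)
  ultimately show ?thesis by blast
qed

lemma Ch_succ:
  assumes "finite M" "0 < p" "W \<in> Ch p M" "has_nxt p M W" "nxt p M W = X"
  shows "{z\<in>Ch p M. X < z} \<noteq> {}" "Min {z\<in>Ch p M. X < z} = W"
proof -
  have lt: "X < W" using nxt_less[OF assms(1,2,4)] assms(5) by simp
  show "{z\<in>Ch p M. X < z} \<noteq> {}" using lt assms(3) by blast
  have fin: "finite {z\<in>Ch p M. X < z}" using Ch_finite[OF assms(1)] by simp
  have "\<forall>z\<in>{z\<in>Ch p M. X < z}. W \<le> z"
    using Ch_between[OF assms(1,3,4)] assms(5) by fastforce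
  then show "Min {z\<in>Ch p M. X < z} = W"
    using lt assms(3) fin by (intro antisym Min.boundedI Min.coboundedI) auto
qed

lemma Fm_asc:
  assumes "finite M" "0 \<notin> M" "0 < p" "W \<in> Ch p M" "has_nxt p M W" "nxt p M W = X"
  shows "W - p \<in> Fm p M" "X \<le> W - p" "\<And>y. y \<in> Fm p M \<Longrightarrow> X \<le> y \<Longrightarrow> W - p \<le> y"
proof -
  have Xle: "X + p \<le> W" using nxt_props(2)[OF assms(1,5)] assms(6) by simp
  have Xin: "X \<in> M" using nxt_props(1)[OF assms(1,5)] assms(6) by simp
  have Wgt: "p < W" using has_nxt_gt[OF assms(2,5)] .
  show "W - p \<in> Fm p M" unfolding Fm_def using assms(4) Wgt by blast
  show "X \<le> W - p" using Xle by simp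
  fix y assume y: "y \<in> Fm p M" "X \<le> y"
  show "W - p \<le> y"
  proof (cases "y \<in> M - Ch p M")
    case True
    have XCh: "X \<in> Ch p M" using nxt_in_Ch[OF assms(1,4)] assms(6) by simp
    show ?thesis
    proof (rule ccontr)
      assume "\<not> W - p \<le> y"
      then have "y + p \<le> W" by simp
      then have "y \<le> X" using nxt_props(3)[OF assms(1,5)] True assms(6) by blast
      then have "y = X" using y by simp
      then show False using True XCh by simp
    qed
  next
    case False
    then obtain Z where Z: "y = Z - p" "Z \<in> Ch p M" "p < Z" using y(1) unfolding Fm_def by blast
    have "X < Z" using Z y assms(3) by linarith
    then have "W \<le> Z" using Ch_between[OF assms(1,4,5) Z(2)] assms(6) by auto
    then show ?thesis using Z by simp
  qed
qed

lemma Fm_top: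
  assumes "finite M" "M \<noteq> {}" "0 < p" "y \<in> Fm p M"
  shows "y < Max M"
proof (cases "y \<in> M - Ch p M")
  case True
  then have "y \<le> Max M" "y \<noteq> Max M" using Max_in_Ch[OF assms(1,2), of p] Max_ge[OF assms(1)] by auto
  then show ?thesis by simp
next
  case False
  then obtain Z where Z: "y = Z - p" "Z \<in> Ch p M" "p < Z" using assms(4) unfolding Fm_def by blast
  then show ?thesis using Ch_le_Max[OF assms(1) Z(2)] assms(3) by simp
qed

lemma Fm_min:
  assumes "finite M" "M \<noteq> {}" "0 \<notin> M" "0 < p" "p < Min (Ch p M)"
  shows "Min (Ch p M) - p \<in> Fm p M" "\<And>y. y \<in> Fm p M \<Longrightarrow> Min (Ch p M) - p \<le> y"
proof -
  let ?z = "Min (Ch p M)"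
  have zin: "?z \<in> Ch p M" using Min_Ch_in assms(1,2) by blast
  show "?z - p \<in> Fm p M" unfolding Fm_def using zin assms(5) by blast
  fix y assume y: "y \<in> Fm p M"
  show "?z - p \<le> y"
  proof (cases "y \<in> M - Ch p M")
    case True
    show ?thesis
    proof (rule ccontr)
      assume "\<not> ?z - p \<le> y"
      then have "y + p \<le> ?z" by simp
      then have "has_nxt p M ?z" using True unfolding has_nxt_def by blast
      then show False using Min_Ch_no_nxt[OF assms(1,2,4)] by simp
    qed
  next
    case False
    then obtain Z where Z: "y = Z - p" "Z \<in> Ch p M" "p < Z" using y unfolding Fm_def by blast
    have "?z \<le> Z" using Z(2) Ch_finite[OF assms(1)] by simp
    then show ?thesis using Z by simp
  qed
qed

lemma Fm_finite: "finite M \<Longrightarrow> finite (Fm p M)"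
  unfolding Fm_def using Ch_finite[of M p] by auto

lemma Fm_nz: "finite M \<Longrightarrow> 0 \<notin> M \<Longrightarrow> 0 \<notin> Fm p M"
  unfolding Fm_def by auto

lemma M_recon:
  assumes "finite M"
  shows "M = (Fm p M - {X - p |X. X \<in> Ch p M \<and> p < X}) \<union> Ch p M"
proof (intro equalityI subsetI)
  fix y assume y: "y \<in> M"
  show "y \<in> (Fm p M - {X - p |X. X \<in> Ch p M \<and> p < X}) \<union> Ch p M"
  proof (cases "y \<in> Ch p M")
    case False
    have "y \<notin> {X - p |X. X \<in> Ch p M \<and> p < X}"
    proof
      assume "y \<in> {X - p |X. X \<in> Ch p M \<and> p < X}"
      then obtain X where "y = X - p" "X \<in> Ch p M" "p < X" by blast
      then have "y \<in> Ch p M" using Ch_sub_p[OF assms] y by blast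
      then show False using False by simp
    qed
    then show ?thesis using y False unfolding Fm_def by blast
  qed simp
next
  fix y assume "y \<in> (Fm p M - {X - p |X. X \<in> Ch p M \<and> p < X}) \<union> Ch p M"
  then show "y \<in> M" unfolding Fm_def using Ch_sub[OF assms] by blast
qed

lemma Cc_zero:
  assumes "finite M" "0 \<notin> M"
  shows "0 \<in> Cc p M \<longleftrightarrow> M \<noteq> {} \<and> Min (Ch p M) \<le> p"
proof
  assume "0 \<in> Cc p M"
  then obtain X where X: "X \<in> Ch p M" "X \<le> p" unfolding Cc_def by auto
  then have "M \<noteq> {}" by (auto simp: Ch_def)
  moreover have "Min (Ch p M) \<le> X" using X Ch_finite[OF assms(1)] by simp
  ultimately show "M \<noteq> {} \<and> Min (Ch p M) \<le> p" using X by simp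
next
  assume h: "M \<noteq> {} \<and> Min (Ch p M) \<le> p"
  have "Min (Ch p M) \<in> M" using Min_Ch_in[OF assms(1)] h Ch_sub[OF assms(1)] by blast
  then have "0 < Min (Ch p M)" using assms(2) by (metis gr0I)
  then show "0 \<in> Cc p M" unfolding Cc_def using Min_Ch_in[OF assms(1)] h by auto
qed

lemma Cc_card:
  assumes "finite M" "M \<noteq> {}" "0 \<notin> M" "0 < p"
  shows "card (Cc p M) = p * (card (Ch p M) - 1) + min (Min (Ch p M)) p"
proof -
  define I where "I X = {X - p..<X}" for X :: nat
  have CcU: "Cc p M = (\<Union>X\<in>Ch p M. I X)" unfolding Cc_def I_def by (auto simp: le_diff_conv)
  have cardI: "card (I X) = min X p" for X unfolding I_def by simp
  have disj: "I X \<inter> I X' = {}" if "X \<in> Ch p M" "X' \<in> Ch p M" "X \<noteq> X'" for X X'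
  proof -
    have key: "I A \<inter> I B = {}" if AB: "A \<in> Ch p M" "B \<in> Ch p M" "B < A" for A B
    proof -
      have "A \<noteq> Min (Ch p M)" using AB Ch_finite[OF assms(1)]
        by (metis Min_le leD)
      then have hn: "has_nxt p M A" using no_nxt_is_Min[OF assms(1) AB(1)] by blast
      have "B \<le> nxt p M A" using Ch_between[OF assms(1) AB(1) hn AB(2)] AB(3) by simp
      then have "B + p \<le> A" using nxt_props(2)[OF assms(1) hn] by simp
      then show ?thesis unfolding I_def by auto
    qed
    show ?thesis using key[of X X'] key[of X' X] that by (cases "X' < X") (auto simp: Int_commute)
  qed
  have "card (Cc p M) = (\<Sum>X\<in>Ch p M. card (I X))"
    unfolding CcU by (rule card_UN_disjoint) (use Ch_finite[OF assms(1)] disj in \<open>auto simp: I_def\<close>)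
  also have "\<dots> = (\<Sum>X\<in>Ch p M. min X p)" using cardI by simp
  also have "\<dots> = min (Min (Ch p M)) p + (\<Sum>X\<in>Ch p M - {Min (Ch p M)}. min X p)"
    using sum.remove[OF Ch_finite[OF assms(1)] Min_Ch_in[OF assms(1,2)], of "\<lambda>X. min X p" p] by simp
  also have "(\<Sum>X\<in>Ch p M - {Min (Ch p M)}. min X p) = (\<Sum>X\<in>Ch p M - {Min (Ch p M)}. p)"
  proof (rule sum.cong)
    fix X assume "X \<in> Ch p M - {Min (Ch p M)}"
    then have "p < X" using Ch_nonmin_gt[OF assms(1,3)] by blast
    then show "min X p = p" by simp
  qed simp
  also have "\<dots> = p * (card (Ch p M) - 1)"
    using Min_Ch_in[OF assms(1,2), of p] Ch_finite[OF assms(1), of p] by simp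
  finally show ?thesis by simp
qed

lemma asc_sub:
  fixes A B :: "nat set"
  assumes "finite A" "finite B" "Min A \<in> B"
    "\<And>x. x \<in> A \<Longrightarrow> (\<exists>z\<in>A. x < z) \<Longrightarrow> P x"
    "\<And>x. x \<in> A \<Longrightarrow> P x \<Longrightarrow> Min {z\<in>A. x < z} = \<sigma> x"
    "\<And>x. x \<in> B \<Longrightarrow> P x \<Longrightarrow> (\<exists>z\<in>B. x < z) \<and> Min {z\<in>B. x < z} = \<sigma> x"
  shows "A \<subseteq> B"
proof
  fix x assume "x \<in> A"
  then show "x \<in> B"
  proof (induction x rule: less_induct)
    case (less x)
    show ?case
    proof (cases "x = Min A")
      case True then show ?thesis using assms(3) by simp
    next
      case False
      have ne: "{z\<in>A. z < x} \<noteq> {}" using False less.prems assms(1)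
        by (metis (mono_tags, lifting) Min_le empty_iff le_neq_implies_less mem_Collect_eq Min_in)
      define w where "w = Max {z\<in>A. z < x}"
      have w: "w \<in> A" "w < x" using Max_in[OF _ ne] assms(1) unfolding w_def by auto
      have wB: "w \<in> B" using less.IH w by blast
      have Pw: "P w" using assms(4)[OF w(1)] w less.prems by blast
      have "Min {z\<in>A. w < z} = x"
      proof (rule antisym)
        show "Min {z\<in>A. w < z} \<le> x" using less.prems w assms(1) by (intro Min_le) auto
        show "x \<le> Min {z\<in>A. w < z}"
        proof (rule Min.boundedI)
          show "finite {z\<in>A. w < z}" using assms(1) by simp
          show "{z\<in>A. w < z} \<noteq> {}" using less.prems w by blast
          fix z assume z: "z \<in> {z\<in>A. w < z}"
          show "x \<le> z"
          proof (rule ccontr)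
            assume "\<not> x \<le> z"
            then have "z \<le> w" unfolding w_def using z assms(1) by (intro Max_ge) auto
            then show False using z by simp
          qed
        qed
      qed
      then have "\<sigma> w = x" using assms(5)[OF w(1) Pw] by simp
      moreover obtain hh: "\<exists>z\<in>B. w < z" "Min {z\<in>B. w < z} = \<sigma> w"
        using assms(6)[OF wB Pw] by blast
      moreover have "Min {z\<in>B. w < z} \<in> {z\<in>B. w < z}" using hh(1) assms(2) by (intro Min_in) auto
      ultimately show ?thesis by simp
    qed
  qed
qed

lemma desc_sub:
  fixes A B :: "nat set"
  assumes "finite A" "finite B" "Max A \<in> B"
    "\<And>x. x \<in> A \<Longrightarrow> (\<exists>z\<in>A. z < x) \<Longrightarrow> P x"
    "\<And>x. x \<in> A \<Longrightarrow> P x \<Longrightarrow> Max {z\<in>A. z < x} = \<sigma> x"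
    "\<And>x. x \<in> B \<Longrightarrow> P x \<Longrightarrow> (\<exists>z\<in>B. z < x) \<and> Max {z\<in>B. z < x} = \<sigma> x"
  shows "A \<subseteq> B"
proof
  fix x assume "x \<in> A"
  then show "x \<in> B"
  proof (induction "Max A - x" arbitrary: x rule: less_induct)
    case (less x)
    have xle: "x \<le> Max A" using less.prems assms(1) by simp
    show ?case
    proof (cases "x = Max A")
      case True then show ?thesis using assms(3) by simp
    next
      case False
      have ne: "{z\<in>A. x < z} \<noteq> {}" using False xle Max_in[of A] assms(1) less.prems
        by (metis (mono_tags, lifting) empty_iff le_neq_implies_less mem_Collect_eq)
      define w where "w = Min {z\<in>A. x < z}"
      have w: "w \<in> A" "x < w" using Min_in[OF _ ne] assms(1) unfolding w_def by auto
      have "w \<le> Max A" using w assms(1) by simp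
      then have wB: "w \<in> B" using less.hyps[of w] w by simp
      have Pw: "P w" using assms(4)[OF w(1)] w less.prems by blast
      have "Max {z\<in>A. z < w} = x"
      proof (rule antisym)
        show "x \<le> Max {z\<in>A. z < w}" using less.prems w assms(1) by (intro Max_ge) auto
        show "Max {z\<in>A. z < w} \<le> x"
        proof (rule Max.boundedI)
          show "finite {z\<in>A. z < w}" using assms(1) by simp
          show "{z\<in>A. z < w} \<noteq> {}" using less.prems w by blast
          fix z assume z: "z \<in> {z\<in>A. z < w}"
          show "z \<le> x"
          proof (rule ccontr)
            assume "\<not> z \<le> x"
            then have "w \<le> z" unfolding w_def using z assms(1) by (intro Min_le) auto
            then show False using z by simp
          qed
        qed
      qed
      then have "\<sigma> w = x" using assms(5)[OF w(1) Pw] by simp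
      moreover obtain hh: "\<exists>z\<in>B. z < w" "Max {z\<in>B. z < w} = \<sigma> w"
        using assms(6)[OF wB Pw] by blast
      moreover have "Max {z\<in>B. z < w} \<in> {z\<in>B. z < w}" using hh(1) assms(2) by (intro Max_in) auto
      ultimately show ?thesis by simp
    qed
  qed
qed

definition has_phi :: "nat set \<Rightarrow> nat \<Rightarrow> bool" where
  "has_phi N X \<longleftrightarrow> (\<exists>y\<in>N. X \<le> y)"
definition phi :: "nat \<Rightarrow> nat set \<Rightarrow> nat \<Rightarrow> nat" where
  "phi p N X = (if has_phi N X then Min {y\<in>N. X \<le> y} + p else X)"
definition aseq :: "nat \<Rightarrow> nat set \<Rightarrow> nat \<Rightarrow> nat \<Rightarrow> nat" where
  "aseq p N x0 j = (phi p N ^^ j) x0"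
definition Chr :: "nat \<Rightarrow> nat set \<Rightarrow> nat \<Rightarrow> nat set" where
  "Chr p N x0 = range (aseq p N x0)"
definition Gm :: "nat \<Rightarrow> nat set \<Rightarrow> nat \<Rightarrow> nat set" where
  "Gm p N x0 = (N - {X - p |X. X \<in> Chr p N x0 \<and> p < X}) \<union> Chr p N x0"

lemma phi_props:
  assumes "finite N" "has_phi N X"
  shows "phi p N X - p \<in> N" "X + p \<le> phi p N X" "p \<le> phi p N X"
    "\<And>y. y \<in> N \<Longrightarrow> X \<le> y \<Longrightarrow> phi p N X - p \<le> y"
    "phi p N X = Min {y\<in>N. X \<le> y} + p"
proof -
  have fin: "finite {y\<in>N. X \<le> y}" using assms(1) by simp
  have ne: "{y\<in>N. X \<le> y} \<noteq> {}" using assms(2) unfolding has_phi_def by auto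
  have mi: "Min {y\<in>N. X \<le> y} \<in> {y\<in>N. X \<le> y}" using Min_in[OF fin ne] .
  show e: "phi p N X = Min {y\<in>N. X \<le> y} + p" using assms(2) unfolding phi_def by simp
  show "phi p N X - p \<in> N" "X + p \<le> phi p N X" "p \<le> phi p N X" using mi e by auto
  show "\<And>y. y \<in> N \<Longrightarrow> X \<le> y \<Longrightarrow> phi p N X - p \<le> y" using e fin by simp
qed

lemma phi_ge: "finite N \<Longrightarrow> X \<le> phi p N X"
  using phi_props(2)[of N X p] by (auto simp: phi_def)

lemma phi_bound: "finite N \<Longrightarrow> phi p N X \<le> max X (Max N + p)"
proof -
  assume fin: "finite N"
  show ?thesis
  proof (cases "has_phi N X")
    case True
    have "phi p N X - p \<in> N" using phi_props(1)[OF fin True] .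
    then have "phi p N X - p \<le> Max N" using fin by simp
    then show ?thesis using phi_props(3)[OF fin True] by simp
  qed (simp add: phi_def)
qed

lemma aseq_Suc: "aseq p N x0 (Suc j) = phi p N (aseq p N x0 j)"
  by (simp add: aseq_def)
lemma aseq_0: "aseq p N x0 0 = x0"
  by (simp add: aseq_def)

lemma aseq_mono: "finite N \<Longrightarrow> i \<le> j \<Longrightarrow> aseq p N x0 i \<le> aseq p N x0 j"
proof (induction j)
  case 0 then show ?case by simp
next
  case (Suc j)
  then show ?case using phi_ge[where N=N and p=p and X="aseq p N x0 j"] by (cases "i = Suc j") (auto simp: aseq_Suc)
qed

lemma aseq_bound: "finite N \<Longrightarrow> aseq p N x0 j \<le> max x0 (Max N + p)"
proof (induction j)
  case 0 then show ?case by (simp add: aseq_0)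
next
  case (Suc j)
  then show ?case using phi_bound[OF Suc.prems, of p "aseq p N x0 j"] by (simp add: aseq_Suc)
qed

lemma Chr_finite: "finite N \<Longrightarrow> finite (Chr p N x0)"
proof -
  assume fin: "finite N"
  have "Chr p N x0 \<subseteq> {..max x0 (Max N + p)}" unfolding Chr_def using aseq_bound[OF fin] by auto
  then show ?thesis using finite_subset by blast
qed

lemma x0_in_Chr: "x0 \<in> Chr p N x0"
  unfolding Chr_def by (metis aseq_0 rangeI)

lemma Chr_ge: "finite N \<Longrightarrow> z \<in> Chr p N x0 \<Longrightarrow> x0 \<le> z"
  unfolding Chr_def using aseq_mono[of N 0 _ p x0] by (auto simp: aseq_0)

lemma phi_in_Chr: "x \<in> Chr p N x0 \<Longrightarrow> phi p N x \<in> Chr p N x0"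
proof -
  assume "x \<in> Chr p N x0"
  then obtain j where "x = aseq p N x0 j" unfolding Chr_def by blast
  then have "phi p N x = aseq p N x0 (Suc j)" by (simp add: aseq_Suc)
  then show ?thesis unfolding Chr_def by simp
qed

lemma Chr_pred:
  assumes "finite N" "0 < p" "x \<in> Chr p N x0" "x \<noteq> x0"
  shows "\<exists>w\<in>Chr p N x0. has_phi N w \<and> phi p N w = x \<and> w < x \<and> (\<forall>z\<in>Chr p N x0. z < x \<longrightarrow> z \<le> w)"
proof -
  from assms obtain j where j: "aseq p N x0 j = x" unfolding Chr_def by blast
  define j0 where "j0 = (LEAST j. aseq p N x0 j = x)"
  have j0: "aseq p N x0 j0 = x" unfolding j0_def using j by (rule LeastI)
  have "j0 \<noteq> 0"
  proof
    assume "j0 = 0" then show False using j0 assms(4) by (simp add: aseq_0)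
  qed
  then obtain i where i: "j0 = Suc i" by (cases j0) auto
  let ?w = "aseq p N x0 i"
  have ne2: "?w \<noteq> x"
  proof
    assume "?w = x"
    then have "j0 \<le> i" unfolding j0_def by (rule Least_le)
    with i show False by simp
  qed
  have ph: "phi p N ?w = x" using j0 i by (simp add: aseq_Suc)
  have hp: "has_phi N ?w" using ph ne2 by (auto simp: phi_def split: if_splits)
  have lt: "?w < x" using phi_props(2)[OF assms(1) hp, of p] ph assms(2) by simp
  have bel: "z \<le> ?w" if zz: "z \<in> Chr p N x0" "z < x" for z
  proof -
    obtain i' where i': "z = aseq p N x0 i'" using zz unfolding Chr_def by blast
    show ?thesis
    proof (cases "i' \<le> i")
      case True then show ?thesis using aseq_mono[OF assms(1) True] i' by simp
    next
      case False
      then have "j0 \<le> i'" using i by simp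
      then have "x \<le> z" using aseq_mono[OF assms(1), of j0 i' p x0] i' j0 by simp
      then show ?thesis using zz by simp
    qed
  qed
  have "?w \<in> Chr p N x0" unfolding Chr_def by simp
  then show ?thesis using ph hp lt bel by blast
qed

lemma Chr_top:
  assumes "finite N" "0 < p"
  shows "\<not> has_phi N (Max (Chr p N x0))"
proof
  assume h: "has_phi N (Max (Chr p N x0))"
  have inn: "Max (Chr p N x0) \<in> Chr p N x0" using Chr_finite[OF assms(1)] x0_in_Chr by (metis Max_in empty_iff)
  have "phi p N (Max (Chr p N x0)) \<in> Chr p N x0" using phi_in_Chr[OF inn] .
  then have "phi p N (Max (Chr p N x0)) \<le> Max (Chr p N x0)" using Chr_finite[OF assms(1)] by simp
  then show False using phi_props(2)[OF assms(1) h, of p] assms(2) by simp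
qed

lemma Ch_desc:
  assumes "finite M" "0 < p" "x \<in> Ch p M"
  shows "(\<exists>z\<in>Ch p M. z < x) \<longleftrightarrow> has_nxt p M x"
    "has_nxt p M x \<Longrightarrow> Max {z\<in>Ch p M. z < x} = nxt p M x"
proof -
  show "(\<exists>z\<in>Ch p M. z < x) \<longleftrightarrow> has_nxt p M x"
  proof
    assume "\<exists>z\<in>Ch p M. z < x"
    then obtain z where "z \<in> Ch p M" "z < x" by blast
    then show "has_nxt p M x" using no_nxt_is_Min[OF assms(1,3)] Ch_finite[OF assms(1)]
      by (metis Min_le leD)
  next
    assume "has_nxt p M x"
    then show "\<exists>z\<in>Ch p M. z < x" using nxt_in_Ch[OF assms(1,3)] nxt_less[OF assms(1,2)] by blast
  qed
  assume h: "has_nxt p M x"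
  show "Max {z\<in>Ch p M. z < x} = nxt p M x"
  proof (rule antisym)
    show "nxt p M x \<le> Max {z\<in>Ch p M. z < x}"
      using nxt_in_Ch[OF assms(1,3)] nxt_less[OF assms(1,2) h] Ch_finite[OF assms(1)] by (intro Max_ge) auto
    show "Max {z\<in>Ch p M. z < x} \<le> nxt p M x"
      using Ch_between[OF assms(1,3) h] nxt_in_Ch[OF assms(1,3)] nxt_less[OF assms(1,2) h] Ch_finite[OF assms(1)]
      by (intro Max.boundedI) force+
  qed
qed

lemma Ch_asc:
  assumes "finite M" "0 \<notin> M" "0 < p" "M \<noteq> {}" "x \<in> Ch p M"
  shows "(\<exists>z\<in>Ch p M. x < z) \<longleftrightarrow> has_phi (Fm p M) x"
    "has_phi (Fm p M) x \<Longrightarrow> Min {z\<in>Ch p M. x < z} = phi p (Fm p M) x"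
proof -
  have "((\<exists>z\<in>Ch p M. x < z) \<longleftrightarrow> has_phi (Fm p M) x) \<and>
        (has_phi (Fm p M) x \<longrightarrow> Min {z\<in>Ch p M. x < z} = phi p (Fm p M) x)"
  proof (cases "x = Max M")
    case True
    have "\<not> has_phi (Fm p M) x" using Fm_top[OF assms(1,4,3)] True unfolding has_phi_def by fastforce
    moreover have "\<not> (\<exists>z\<in>Ch p M. x < z)" using Ch_le_Max[OF assms(1)] True by fastforce
    ultimately show ?thesis by simp
  next
    case False
    obtain W where W: "W \<in> Ch p M" "has_nxt p M W" "nxt p M W = x" using Ch_pred_exists[OF assms(1,5) False] by blast
    have s1: "{z\<in>Ch p M. x < z} \<noteq> {}" "Min {z\<in>Ch p M. x < z} = W" using Ch_succ[OF assms(1,3) W] by auto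
    note fa = Fm_asc[OF assms(1,2,3) W]
    have hp: "has_phi (Fm p M) x" unfolding has_phi_def using fa(1,2) by blast
    have "Min {y\<in>Fm p M. x \<le> y} = W - p"
      using fa Fm_finite[OF assms(1), of p] by (intro antisym Min_le Min.boundedI) auto
    moreover have "p < W" using has_nxt_gt[OF assms(2) W(2)] .
    ultimately have "phi p (Fm p M) x = W" using hp unfolding phi_def by simp
    then show ?thesis using s1 hp by auto
  qed
  then show "(\<exists>z\<in>Ch p M. x < z) \<longleftrightarrow> has_phi (Fm p M) x"
    "has_phi (Fm p M) x \<Longrightarrow> Min {z\<in>Ch p M. x < z} = phi p (Fm p M) x" by auto
qed

lemma M_empty_iff:
  assumes "finite M" "0 \<notin> M" "0 < p"
  shows "M = {} \<longleftrightarrow> Fm p M = {} \<and> 0 \<notin> Cc p M"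
proof
  assume "M = {}" then show "Fm p M = {} \<and> 0 \<notin> Cc p M" by (simp add: Fm_def Cc_def Ch_def)
next
  assume h: "Fm p M = {} \<and> 0 \<notin> Cc p M"
  show "M = {}"
  proof (rule ccontr)
    assume ne: "M \<noteq> {}"
    then have "p < Min (Ch p M)" using h Cc_zero[OF assms(1,2)] by auto
    then show False using Fm_min(1)[OF assms(1) ne assms(2,3)] h by simp
  qed
qed

lemma Min_Fm_eq:
  assumes "finite M" "M \<noteq> {}" "0 \<notin> M" "0 < p" "p < Min (Ch p M)"
  shows "Min (Fm p M) = Min (Ch p M) - p"
  using Fm_min[OF assms] Fm_finite[OF assms(1), of p]
  by (intro antisym Min_le Min.boundedI) auto

lemma Min_Ch_small:
  assumes "finite M" "M \<noteq> {}" "0 \<notin> M" "0 < p" "0 \<in> Cc p M"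
  shows "1 \<le> Min (Ch p M)" "Min (Ch p M) \<le> p" "card (Cc p M) mod p = Min (Ch p M) mod p"
proof -
  have "Min (Ch p M) \<in> M" using Min_Ch_in[OF assms(1,2)] Ch_sub[OF assms(1)] by blast
  then show "1 \<le> Min (Ch p M)" using assms(3) by (metis less_one not_le)
  show le: "Min (Ch p M) \<le> p" using Cc_zero[OF assms(1,3)] assms(5) by simp
  show "card (Cc p M) mod p = Min (Ch p M) mod p"
    using Cc_card[OF assms(1-4)] le by simp
qed

lemma mod_inj_1p:
  fixes a b p :: nat
  assumes "1 \<le> a" "a \<le> p" "1 \<le> b" "b \<le> p" "a mod p = b mod p"
  shows "a = b"
proof -
  have ma: "a mod p = (if a = p then 0 else a)" using assms(1,2) by auto
  have mb: "b mod p = (if b = p then 0 else b)" using assms(3,4) by auto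
  show ?thesis using assms(1,3,5) ma mb by (auto split: if_splits)
qed

lemma uniqM:
  assumes "finite M1" "finite M2" "0 \<notin> M1" "0 \<notin> M2" "0 < p"
    "Fm p M1 = Fm p M2" "0 \<in> Cc p M1 \<longleftrightarrow> 0 \<in> Cc p M2"
    "card (Cc p M1) mod p = card (Cc p M2) mod p"
  shows "M1 = M2"
proof (cases "M1 = {} \<or> M2 = {}")
  case True
  then show ?thesis using M_empty_iff[OF assms(1,3,5)] M_empty_iff[OF assms(2,4,5)] assms(6,7) by auto
next
  case False
  then have ne1: "M1 \<noteq> {}" and ne2: "M2 \<noteq> {}" by auto
  have minEq: "Min (Ch p M1) = Min (Ch p M2)"
  proof (cases "0 \<in> Cc p M1")
    case True
    then have T2: "0 \<in> Cc p M2" using assms(7) by simp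
    note a = Min_Ch_small[OF assms(1) ne1 assms(3,5) True]
    note b = Min_Ch_small[OF assms(2) ne2 assms(4,5) T2]
    show ?thesis using mod_inj_1p[OF a(1,2) b(1,2)] a(3) b(3) assms(8) by simp
  next
    case False
    then have F2: "0 \<notin> Cc p M2" using assms(7) by simp
    have g1: "p < Min (Ch p M1)" using False Cc_zero[OF assms(1,3)] ne1 by simp
    have g2: "p < Min (Ch p M2)" using F2 Cc_zero[OF assms(2,4)] ne2 by simp
    show ?thesis using Min_Fm_eq[OF assms(1) ne1 assms(3,5) g1] Min_Fm_eq[OF assms(2) ne2 assms(4,5) g2] assms(6) g1 g2
      by simp
  qed
  let ?N = "Fm p M1"
  have sub: "Ch p A \<subseteq> Ch p B"
    if "finite A" "finite B" "0 \<notin> A" "0 \<notin> B" "A \<noteq> {}" "B \<noteq> {}" "Fm p A = ?N" "Fm p B = ?N"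
       "Min (Ch p A) = Min (Ch p B)" for A B
  proof (rule asc_sub[where P = "has_phi ?N" and \<sigma> = "phi p ?N"])
    show "finite (Ch p A)" "finite (Ch p B)" using Ch_finite that by auto
    show "Min (Ch p A) \<in> Ch p B" using that(9) Min_Ch_in[OF that(2,6)] by simp
    fix x assume x: "x \<in> Ch p A"
    show "\<exists>z\<in>Ch p A. x < z \<Longrightarrow> has_phi ?N x"
      using Ch_asc(1)[OF that(1,3) assms(5) that(5) x] that(7) by simp
    show "has_phi ?N x \<Longrightarrow> Min {z \<in> Ch p A. x < z} = phi p ?N x"
      using Ch_asc(2)[OF that(1,3) assms(5) that(5) x] that(7) by simp
  next
    fix x assume x: "x \<in> Ch p B"
    show "has_phi ?N x \<Longrightarrow> (\<exists>z\<in>Ch p B. x < z) \<and> Min {z \<in> Ch p B. x < z} = phi p ?N x"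
      using Ch_asc[OF that(2,4) assms(5) that(6) x] that(8) by simp
  qed
  have "Ch p M1 = Ch p M2"
  proof (rule equalityI)
    show "Ch p M1 \<subseteq> Ch p M2" by (rule sub[of M1 M2]) (use assms ne1 ne2 minEq in simp_all)
    show "Ch p M2 \<subseteq> Ch p M1" by (rule sub[of M2 M1]) (use assms ne1 ne2 minEq in simp_all)
  qed
  then show ?thesis using M_recon[OF assms(1), of p] M_recon[OF assms(2), of p] assms(6) by simp
qed

lemma existM:
  assumes fin: "finite N" and nz: "0 \<notin> N" and p0: "0 < p" and x1: "1 \<le> x0"
    and H: "x0 \<le> p \<or> (N \<noteq> {} \<and> x0 = Min N + p)"
  defines "M \<equiv> Gm p N x0"
  shows "finite M" "0 \<notin> M" "M \<noteq> {}" "Ch p M = Chr p N x0" "Fm p M = N" "Min (Ch p M) = x0"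
proof -
  let ?R = "Chr p N x0"
  let ?S = "{X - p |X. X \<in> ?R \<and> p < X}"
  have Md: "M = (N - ?S) \<union> ?R" unfolding M_def Gm_def by simp
  have finR: "finite ?R" using Chr_finite[OF fin] .
  show finM: "finite M" using Md fin finR by simp
  have Rge: "\<And>z. z \<in> ?R \<Longrightarrow> x0 \<le> z" using Chr_ge[OF fin] .
  show nzM: "0 \<notin> M" using Md nz Rge x1 by force
  show neM: "M \<noteq> {}" using Md x0_in_Chr by blast
  have SN: "?S \<subseteq> N"
  proof
    fix y assume "y \<in> ?S"
    then obtain X where X: "y = X - p" "X \<in> ?R" "p < X" by blast
    show "y \<in> N"
    proof (cases "X = x0")
      case True
      then have "N \<noteq> {} \<and> x0 = Min N + p" using H X(3) by simp
      then show ?thesis using X True fin by simp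
    next
      case False
      obtain w where w: "w \<in> ?R" "has_phi N w" "phi p N w = X" using Chr_pred[OF fin p0 X(2) False] by blast
      show ?thesis using phi_props(1)[OF fin w(2), of p] w X by simp
    qed
  qed
  have disj: "x \<in> ?S" if "x \<in> ?R" "x \<in> N" for x
  proof -
    have hp: "has_phi N x" using that unfolding has_phi_def by blast
    have "Min {y\<in>N. x \<le> y} = x" using that fin by (intro antisym Min_le Min.boundedI) auto
    then have "phi p N x = x + p" using hp unfolding phi_def by simp
    moreover have "phi p N x \<in> ?R" using phi_in_Chr[OF that(1)] .
    moreover have "p < x + p" using Rge[OF that(1)] x1 by simp
    ultimately show ?thesis by force
  qed
  have top: "\<And>y. y \<in> N \<Longrightarrow> y < Max ?R"
    using Chr_top[OF fin p0, of x0] unfolding has_phi_def by (metis not_le)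
  have MaxR: "Max ?R \<in> ?R" using finR x0_in_Chr by (metis Max_in empty_iff)
  have MaxM: "Max M = Max ?R"
  proof (rule antisym)
    show "Max ?R \<le> Max M" using MaxR Md finM by simp
    show "Max M \<le> Max ?R"
    proof (rule Max.boundedI[OF finM neM])
      fix a assume "a \<in> M"
      then show "a \<le> Max ?R" using Md top finR by (auto simp: less_imp_le)
    qed
  qed
  have Rdesc1: "(\<exists>z\<in>?R. z < x) \<longleftrightarrow> has_nxt p M x" and
       Rdesc2: "has_nxt p M x \<Longrightarrow> Max {z\<in>?R. z < x} = nxt p M x" if xR: "x \<in> ?R" for x
  proof -
    have "((\<exists>z\<in>?R. z < x) \<longleftrightarrow> has_nxt p M x) \<and> (has_nxt p M x \<longrightarrow> Max {z\<in>?R. z < x} = nxt p M x)"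
    proof (cases "x = x0")
      case True
      have "\<not> has_nxt p M x0"
      proof
        assume "has_nxt p M x0"
        then obtain Y where Y: "Y \<in> M" "Y + p \<le> x0" unfolding has_nxt_def by blast
        show False
        proof (cases "Y \<in> ?R")
          case True then show False using Rge[OF True] Y(2) p0 by simp
        next
          case False
          then have YN: "Y \<in> N" "Y \<notin> ?S" using Y(1) Md by auto
          have "Y \<noteq> 0" using YN nz by metis
          then have "N \<noteq> {} \<and> x0 = Min N + p" using H Y(2) by auto
          then have "Y = Min N" using YN fin Y(2) by (metis Min_le add_le_cancel_right antisym)
          then have "Y = x0 - p" "p < x0" using \<open>N \<noteq> {} \<and> x0 = Min N + p\<close> \<open>Y \<noteq> 0\<close> by auto
          then have "Y \<in> ?S" using x0_in_Chr by blast
          then show False using YN by simp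
        qed
      qed
      moreover have "\<not> (\<exists>z\<in>?R. z < x0)" using Rge by (metis not_le)
      ultimately show ?thesis using True by simp
    next
      case False
      obtain w where w: "w \<in> ?R" "has_phi N w" "phi p N w = x" "w < x" "\<forall>z\<in>?R. z < x \<longrightarrow> z \<le> w"
        using Chr_pred[OF fin p0 xR False] by blast
      note pp = phi_props[OF fin w(2), where p=p]
      let ?y = "x - p"
      have xy: "x = ?y + p" "w \<le> ?y" "?y \<in> N" using pp w(3) by auto
      have wM: "w \<in> M" using Md w(1) by simp
      have hn: "has_nxt p M x" unfolding has_nxt_def using wM xy by (intro bexI[of _ w]) auto
      have nx: "nxt p M x = w"
      proof (rule antisym)
        show "w \<le> nxt p M x" using nxt_props(3)[OF finM hn wM] xy by simp
        have "nxt p M x \<in> M" "nxt p M x + p \<le> x" using nxt_props[OF finM hn] by auto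
        then have Yin: "nxt p M x \<in> M" "nxt p M x \<le> ?y" by auto
        show "nxt p M x \<le> w"
        proof (cases "nxt p M x \<in> ?R")
          case True
          have "nxt p M x < x" using Yin(2) xy(1) p0 by linarith
          then show ?thesis using w(5) True by blast
        next
          case False
          then have YN: "nxt p M x \<in> N" "nxt p M x \<notin> ?S" using Yin(1) Md by auto
          show ?thesis
          proof (rule ccontr)
            assume "\<not> nxt p M x \<le> w"
            then have "w \<le> nxt p M x" by simp
            then have "?y \<le> nxt p M x" using pp(4)[OF YN(1)] w(3) by simp
            then have "nxt p M x = ?y" using Yin(2) by simp
            moreover have "?y \<in> ?S"
            proof -
              have "?y \<noteq> 0" using xy(3) nz by metis
              then have "p < x" using xy(1) by linarith
              then show ?thesis using xR by blast
            qed
            ultimately show False using YN by simp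
          qed
        qed
      qed
      have mx: "Max {z\<in>?R. z < x} = w"
        using w finR by (intro antisym Max_ge Max.boundedI) auto
      show ?thesis using hn nx mx w(1,4) by auto
    qed
    then show "(\<exists>z\<in>?R. z < x) \<longleftrightarrow> has_nxt p M x" "has_nxt p M x \<Longrightarrow> Max {z\<in>?R. z < x} = nxt p M x" by auto
  qed
  show ChM: "Ch p M = ?R"
  proof (rule equalityI)
    show "Ch p M \<subseteq> ?R"
    proof (rule desc_sub[where P = "has_nxt p M" and \<sigma> = "nxt p M"])
      show "finite (Ch p M)" using Ch_finite[OF finM] .
      show "finite ?R" using finR .
      show "Max (Ch p M) \<in> ?R"
      proof -
        have "Max (Ch p M) = Max M" using Max_Ch[OF finM neM] .
        then show ?thesis using MaxM MaxR by simp
      qed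
      fix x assume x: "x \<in> Ch p M"
      show "\<exists>z\<in>Ch p M. z < x \<Longrightarrow> has_nxt p M x" using Ch_desc(1)[OF finM p0 x] by simp
      show "has_nxt p M x \<Longrightarrow> Max {z \<in> Ch p M. z < x} = nxt p M x" using Ch_desc(2)[OF finM p0 x] by simp
    next
      fix x assume x: "x \<in> ?R"
      show "has_nxt p M x \<Longrightarrow> (\<exists>z\<in>?R. z < x) \<and> Max {z \<in> ?R. z < x} = nxt p M x"
        using Rdesc1[OF x] Rdesc2[OF x] by simp
    qed
    show "?R \<subseteq> Ch p M"
    proof (rule desc_sub[where P = "has_nxt p M" and \<sigma> = "nxt p M"])
      show "finite (Ch p M)" using Ch_finite[OF finM] .
      show "finite ?R" using finR .
      show "Max ?R \<in> Ch p M" using MaxM Max_in_Ch[OF finM neM, of p] by simp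
      fix x assume x: "x \<in> ?R"
      show "\<exists>z\<in>?R. z < x \<Longrightarrow> has_nxt p M x" using Rdesc1[OF x] by simp
      show "has_nxt p M x \<Longrightarrow> Max {z \<in> ?R. z < x} = nxt p M x" using Rdesc2[OF x] by simp
    next
      fix x assume x: "x \<in> Ch p M"
      show "has_nxt p M x \<Longrightarrow> (\<exists>z\<in>Ch p M. z < x) \<and> Max {z \<in> Ch p M. z < x} = nxt p M x"
        using Ch_desc[OF finM p0 x] by simp
    qed
  qed
  show "Fm p M = N"
  proof -
    have "Fm p M = (M - ?R) \<union> ?S" unfolding Fm_def ChM by simp
    also have "\<dots> = ((N - ?S) - ?R) \<union> ?S" using Md by blast
    also have "\<dots> = N" using SN disj by blast
    finally show ?thesis .
  qed
  show "Min (Ch p M) = x0" unfolding ChM using x0_in_Chr[of x0 p N] Rge finR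
    by (intro antisym Min_le Min.boundedI) auto
qed



definition fM :: "nat set \<Rightarrow> nat \<Rightarrow> nat" where
  "fM M c = card {y\<in>M. c < y}"

definition Dg :: "(nat \<Rightarrow> nat) \<Rightarrow> diagram" where
  "Dg f = {(i,j). 1 \<le> i \<and> i \<le> j \<and> i \<le> f (j - i)} \<union> {(i,j). 1 \<le> j \<and> j < i \<and> j \<le> f (i - j)}"

definition DM :: "nat set \<Rightarrow> diagram" where
  "DM M = Dg (fM M)"

lemma fM_Suc: "finite M \<Longrightarrow> fM M c = fM M (Suc c) + (if Suc c \<in> M then 1 else 0)"
proof -
  assume fin: "finite M"
  have "{y\<in>M. c < y} = {y\<in>M. Suc c < y} \<union> (if Suc c \<in> M then {Suc c} else {})" by (auto intro: Suc_lessI)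
  then show ?thesis unfolding fM_def using fin by (auto simp: card_insert_if)
qed

lemma fM_antimono: "finite M \<Longrightarrow> c \<le> c' \<Longrightarrow> fM M c' \<le> fM M c"
  unfolding fM_def by (intro card_mono) auto

lemma fM_unit: "finite M \<Longrightarrow> fM M c \<le> fM M (c + d) + d"
proof (induction d)
  case 0 then show ?case by simp
next
  case (Suc d)
  then show ?case using fM_Suc[OF Suc.prems, of "c + d"] by (simp split: if_splits)
qed

lemma fM_pos: "finite M \<Longrightarrow> 0 < fM M c \<longleftrightarrow> (\<exists>y\<in>M. c < y)"
  unfolding fM_def by (auto simp: card_gt_0_iff)

lemma fM_zero_big: "finite M \<Longrightarrow> M \<subseteq> {..N} \<Longrightarrow> N \<le> c \<Longrightarrow> fM M c = 0"
  unfolding fM_def by fastforce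

lemma young_Dg:
  assumes mono: "\<And>c c'. c \<le> c' \<Longrightarrow> f c' \<le> f c"
    and unit: "\<And>c d. f c \<le> f (c + d) + d"
    and fin: "\<And>c. N \<le> c \<Longrightarrow> f c = 0"
  shows "young (Dg f)"
proof -
  have sub: "Dg f \<subseteq> {1..N+f 0} \<times> {1..N + f 0}"
  proof
    fix x assume "x \<in> Dg f"
    then obtain i j where x: "x = (i,j)" "(i,j) \<in> Dg f" by (cases x) auto
    show "x \<in> {1..N+f 0} \<times> {1..N + f 0}"
    proof (cases "i \<le> j")
      case True
      then have "1 \<le> i" "i \<le> f (j - i)" using x(2) unfolding Dg_def by auto
      then have "j - i < N" using fin by (metis not_le le_zero_eq not_one_le_zero order_trans)
      moreover have "f (j - i) \<le> f 0" using mono by simp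
      ultimately show ?thesis using x True \<open>1 \<le> i\<close> \<open>i \<le> f (j - i)\<close> by auto
    next
      case False
      then have "1 \<le> j" "j \<le> f (i - j)" using x(2) unfolding Dg_def by auto
      then have "i - j < N" using fin by (metis not_le le_zero_eq not_one_le_zero order_trans)
      moreover have "f (i - j) \<le> f 0" using mono by simp
      ultimately show ?thesis using x False \<open>1 \<le> j\<close> \<open>j \<le> f (i - j)\<close> by auto
    qed
  qed
  have finD: "finite (Dg f)" using sub finite_subset by blast
  have pos: "\<forall>(i,j)\<in>Dg f. 1 \<le> i \<and> 1 \<le> j" unfolding Dg_def by auto
  have up: "(i',j') \<in> Dg f" if h: "(i,j) \<in> Dg f" "1 \<le> i'" "i' \<le> i" "1 \<le> j'" "j' \<le> j" for i j i' j'
  proof -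
    have key: "i' \<le> f (j' - i')" if "(i,j) \<in> Dg f" "i' \<le> j'" "i' \<le> i" "j' \<le> j" for i j i' j'
    proof (cases "i \<le> j")
      case True
      then have hi: "i \<le> f (j - i)" using that(1) unfolding Dg_def by auto
      show ?thesis
      proof (cases "j' - i' \<le> j - i")
        case True then show ?thesis using mono[OF True] hi that by simp
      next
        case False
        have "f (j - i) \<le> f ((j - i) + ((j' - i') - (j - i))) + ((j' - i') - (j - i))" by (rule unit)
        then show ?thesis using hi False that \<open>i \<le> j\<close> by simp
      qed
    next
      case False
      then have hj: "j \<le> f (i - j)" using that(1) unfolding Dg_def by auto
      have "f (i - j) \<le> f 0" using mono by simp
      then have "j \<le> f 0" using hj by simp
      have "f 0 \<le> f (0 + (j' - i')) + (j' - i')" by (rule unit)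
      then show ?thesis using \<open>j \<le> f 0\<close> that by simp
    qed
    show ?thesis
    proof (cases "i' \<le> j'")
      case True
      have "i' \<le> f (j' - i')"
      proof (cases "i \<le> j")
        case True
        then show ?thesis using key[OF h(1) \<open>i' \<le> j'\<close> h(3) h(5)] by simp
      next
        case False
        then have "(j,i) \<in> Dg f" using h(1) unfolding Dg_def by auto
        then show ?thesis using key[OF h(1) \<open>i' \<le> j'\<close> h(3) h(5)] by simp
      qed
      then show ?thesis using True h(2) unfolding Dg_def by auto
    next
      case False
      have hT: "(j,i) \<in> Dg f" using h(1) unfolding Dg_def by auto
      have "j' \<le> f (i' - j')" using key[OF hT _ h(5) h(3)] False by simp
      then show ?thesis using False h(4) unfolding Dg_def by auto
    qed
  qed
  show ?thesis unfolding young_def using finD pos up by blast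
qed

lemma Dg_sc: "self_conjugate (Dg f)"
  unfolding self_conjugate_def conjugate_def Dg_def by fastforce

lemma young_DM: "finite M \<Longrightarrow> young (DM M)"
  unfolding DM_def
proof (rule young_Dg)
  assume fin: "finite M"
  show "\<And>c c'. c \<le> c' \<Longrightarrow> fM M c' \<le> fM M c" using fM_antimono[OF fin] .
  show "\<And>c d. fM M c \<le> fM M (c + d) + d" using fM_unit[OF fin] .
  show "\<And>c. Max (insert 0 M) \<le> c \<Longrightarrow> fM M c = 0"
    using fin by (intro fM_zero_big[of M "Max (insert 0 M)"]) auto
qed

lemma sc_DM: "self_conjugate (DM M)"
  unfolding DM_def by (rule Dg_sc)

definition dl :: "diagram \<Rightarrow> nat \<Rightarrow> nat" where
  "dl D c = card {i. 1 \<le> i \<and> (i, i + c) \<in> D}"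

lemma Dg_diag: "(i, i + c) \<in> Dg f \<longleftrightarrow> 1 \<le> i \<and> i \<le> f c"
  unfolding Dg_def by auto

lemma dl_Dg: "dl (Dg f) c = f c"
proof -
  have "{i. 1 \<le> i \<and> (i, i + c) \<in> Dg f} = {1..f c}" using Dg_diag by auto
  then show ?thesis unfolding dl_def by simp
qed

lemma DM_inj:
  assumes "finite M1" "finite M2" "0 \<notin> M1" "0 \<notin> M2" "DM M1 = DM M2"
  shows "M1 = M2"
proof -
  have f: "fM M1 c = fM M2 c" for c using dl_Dg[of "fM M1" c] dl_Dg[of "fM M2" c] assms(5) unfolding DM_def by simp
  have "y \<in> M1 \<longleftrightarrow> y \<in> M2" for y
  proof (cases y)
    case 0 then show ?thesis using assms(3,4) by simp
  next
    case (Suc c)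
    then show ?thesis using fM_Suc[OF assms(1), of c] fM_Suc[OF assms(2), of c] f[of c] f[of "Suc c"]
      by (auto split: if_splits)
  qed
  then show ?thesis by blast
qed

lemma young_down: "young D \<Longrightarrow> (i,j) \<in> D \<Longrightarrow> 1 \<le> i' \<Longrightarrow> i' \<le> i \<Longrightarrow> 1 \<le> j' \<Longrightarrow> j' \<le> j \<Longrightarrow> (i',j') \<in> D"
  unfolding young_def by blast

lemma young_pos: "young D \<Longrightarrow> (i,j) \<in> D \<Longrightarrow> 1 \<le> i \<and> 1 \<le> j"
  unfolding young_def by blast

lemma young_finite: "young D \<Longrightarrow> finite D"
  unfolding young_def by blast

lemma dl_iff:
  assumes "young D"
  shows "(i, i + c) \<in> D \<longleftrightarrow> 1 \<le> i \<and> i \<le> dl D c"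
proof -
  let ?S = "{i. 1 \<le> i \<and> (i, i + c) \<in> D}"
  have finS: "finite ?S"
  proof -
    have "?S \<subseteq> fst ` D" by force
    then show ?thesis using young_finite[OF assms] finite_subset by blast
  qed
  show ?thesis
  proof (cases "?S = {}")
    case True
    then have "dl D c = 0" unfolding dl_def by (metis card.empty)
    then show ?thesis using True young_pos[OF assms] by fastforce
  next
    case False
    have "?S = {1..Max ?S}"
    proof
      show "?S \<subseteq> {1..Max ?S}" using finS by auto
      show "{1..Max ?S} \<subseteq> ?S"
      proof
        fix i assume i: "i \<in> {1..Max ?S}"
        have "Max ?S \<in> ?S" using Max_in[OF finS False] .
        then have "(Max ?S, Max ?S + c) \<in> D" by simp
        then have "(i, i + c) \<in> D" using young_down[OF assms] i by auto
        then show "i \<in> ?S" using i by simp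
      qed
    qed
    then have "card ?S = card {1..Max ?S}" by (rule arg_cong)
    then have "dl D c = Max ?S" unfolding dl_def by simp
    have "(i, i + c) \<in> D \<longleftrightarrow> i \<in> ?S" using young_pos[OF assms] by auto
    also have "\<dots> \<longleftrightarrow> i \<in> {1..Max ?S}" using \<open>?S = {1..Max ?S}\<close> by simp
    finally show ?thesis using \<open>dl D c = Max ?S\<close> by simp
  qed
qed

lemma young_bound: "young D \<Longrightarrow> \<exists>N. \<forall>(i,j)\<in>D. i \<le> N \<and> j \<le> N"
proof -
  assume y: "young D"
  let ?N = "Max (fst ` D \<union> snd ` D \<union> {0})"
  have "finite (fst ` D \<union> snd ` D \<union> {0})" using young_finite[OF y] by simp
  then have "\<forall>(i,j)\<in>D. i \<le> ?N \<and> j \<le> ?N" by (auto intro!: Max_ge) (force+)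
  then show ?thesis by blast
qed

lemma repr:
  assumes y: "young D" and sc: "self_conjugate D"
  shows "\<exists>M. finite M \<and> 0 \<notin> M \<and> D = DM M"
proof -
  let ?f = "dl D"
  obtain N where N: "\<forall>(i,j)\<in>D. i \<le> N \<and> j \<le> N" using young_bound[OF y] by blast
  have f0: "?f c = 0" if "N \<le> c" for c
  proof (rule ccontr)
    assume "?f c \<noteq> 0"
    then have "(1, 1 + c) \<in> D" using dl_iff[OF y, of 1 c] by simp
    then show False using N that by auto
  qed
  have fmono: "?f (Suc c) \<le> ?f c" for c
  proof (cases "?f (Suc c) = 0")
    case False
    then have "(?f (Suc c), ?f (Suc c) + Suc c) \<in> D" using dl_iff[OF y, of "?f (Suc c)" "Suc c"] by simp
    then have "(?f (Suc c), ?f (Suc c) + c) \<in> D" using young_down[OF y, of "?f (Suc c)" "?f (Suc c) + Suc c" "?f (Suc c)" "?f (Suc c) + c"] False by simp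
    then show ?thesis using dl_iff[OF y] by simp
  qed simp
  have funit: "?f c \<le> ?f (Suc c) + 1" for c
  proof (cases "?f c \<le> 1")
    case False
    then have "(?f c, ?f c + c) \<in> D" using dl_iff[OF y, of "?f c" c] by simp
    then have "(?f c - 1, ?f c + c) \<in> D" using young_down[OF y, of "?f c" "?f c + c" "?f c - 1" "?f c + c"] False by simp
    moreover have e: "(?f c - 1) + Suc c = ?f c + c" using False by simp
    ultimately have "(?f c - 1, (?f c - 1) + Suc c) \<in> D" by (simp only: e)
    then have "?f c - 1 \<le> ?f (Suc c)" using dl_iff[OF y, of "?f c - 1" "Suc c"] by blast
    then show ?thesis by simp
  qed simp
  define M where "M = {Suc c | c. ?f (Suc c) < ?f c}"
  have MN: "M \<subseteq> {..N}"
  proof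
    fix y assume "y \<in> M"
    then obtain c where c: "y = Suc c" "?f (Suc c) < ?f c" unfolding M_def by blast
    then have "c < N" using f0 by (metis not_le not_less0)
    then show "y \<in> {..N}" using c by simp
  qed
  have finM: "finite M" using MN finite_subset by blast
  have nzM: "0 \<notin> M" unfolding M_def by auto
  have feq: "?f c = fM M c" for c
  proof (induction "N - c" arbitrary: c)
    case 0
    then have "N \<le> c" by simp
    then show ?case using f0 fM_zero_big[OF finM MN] by simp
  next
    case (Suc k)
    then have "N - Suc c = k" by simp
    then have IH: "?f (Suc c) = fM M (Suc c)" using Suc.hyps(1) by blast
    have "Suc c \<in> M \<longleftrightarrow> ?f (Suc c) < ?f c" unfolding M_def by auto
    then have "?f c = ?f (Suc c) + (if Suc c \<in> M then 1 else 0)" using fmono[of c] funit[of c] by auto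
    then show ?case using IH fM_Suc[OF finM, of c] by simp
  qed
  have "D = Dg ?f"
  proof (intro equalityI subsetI)
    fix x assume x: "x \<in> D"
    obtain i j where ij: "x = (i,j)" by (cases x)
    have pos: "1 \<le> i" "1 \<le> j" using young_pos[OF y] x ij by auto
    show "x \<in> Dg ?f"
    proof (cases "i \<le> j")
      case True
      have "(i, i + (j - i)) \<in> D" using x ij True by simp
      then have "i \<le> ?f (j - i)" using dl_iff[OF y] by blast
      then show ?thesis using ij True pos unfolding Dg_def by auto
    next
      case False
      have "(j, i) \<in> D" using x ij sc unfolding self_conjugate_def conjugate_def by blast
      then have "(j, j + (i - j)) \<in> D" using False by simp
      then have "j \<le> ?f (i - j)" using dl_iff[OF y] by blast
      then show ?thesis using ij False pos unfolding Dg_def by auto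
    qed
  next
    fix x assume x: "x \<in> Dg ?f"
    obtain i j where ij: "x = (i,j)" by (cases x)
    show "x \<in> D"
    proof (cases "i \<le> j")
      case True
      then have "1 \<le> i" "i \<le> ?f (j - i)" using x ij unfolding Dg_def by auto
      then have "(i, i + (j - i)) \<in> D" using dl_iff[OF y] by blast
      then show ?thesis using ij True by simp
    next
      case False
      then have "1 \<le> j" "j \<le> ?f (i - j)" using x ij unfolding Dg_def by auto
      then have "(j, j + (i - j)) \<in> D" using dl_iff[OF y] by blast
      then have "(j, i) \<in> D" using False by simp
      then show ?thesis using ij sc unfolding self_conjugate_def conjugate_def by blast
    qed
  qed
  moreover have "?f = fM M" using feq by blast
  ultimately show ?thesis using finM nzM unfolding DM_def by auto
qed

definition cont :: "nat \<times> nat \<Rightarrow> int" where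
  "cont x = int (snd x) - int (fst x)"

lemma rim_Dg: "(i,j) \<in> rim (Dg f) \<longleftrightarrow> (1 \<le> i \<and> i \<le> j \<and> i = f (j - i)) \<or> (1 \<le> j \<and> j < i \<and> j = f (i - j))"
  unfolding rim_def Dg_def by auto

lemma rim_order:
  assumes y: "young D" and x: "x \<in> rim D" and yr: "z \<in> rim D" and lt: "fst z < fst x"
  shows "cont x < cont z"
proof (rule ccontr)
  assume "\<not> cont x < cont z"
  then have le: "int (snd z) - int (fst z) \<le> int (snd x) - int (fst x)" unfolding cont_def by simp
  have xD: "x \<in> D" using x unfolding rim_def by auto
  have "z \<in> D" using yr unfolding rim_def by auto
  then have zpos: "1 \<le> fst z" "1 \<le> snd z" using young_pos[OF y, of "fst z" "snd z"] by auto
  have "(fst z + 1, snd z + 1) \<in> D"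
    using young_down[OF y, of "fst x" "snd x" "fst z + 1" "snd z + 1"] xD lt le zpos by auto
  then show False using yr unfolding rim_def by (auto simp: case_prod_beta)
qed

lemma rim_label_cont:
  assumes y: "young D" and x: "x \<in> rim D"
  shows "rim_label D x = card {z\<in>rim D. cont x < cont z} + 1"
proof -
  have "{z\<in>rim D. fst z < fst x \<or> (fst z = fst x \<and> snd z > snd x)} = {z\<in>rim D. cont x < cont z}"
  proof (intro Collect_cong conj_cong refl)
    fix z assume z: "z \<in> rim D"
    show "(fst z < fst x \<or> (fst z = fst x \<and> snd z > snd x)) \<longleftrightarrow> cont x < cont z"
      using rim_order[OF y x z] rim_order[OF y z x] unfolding cont_def
      by (cases "fst z < fst x"; cases "fst x < fst z") auto
  qed
  then show ?thesis unfolding rim_label_def by simp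
qed

lemma rim_cont_inj: "young D \<Longrightarrow> inj_on cont (rim D)"
proof (rule inj_onI)
  fix x z assume y: "young D" and x: "x \<in> rim D" and z: "z \<in> rim D" and e: "cont x = cont z"
  have "fst x = fst z" using rim_order[OF y x z] rim_order[OF y z x] e by (cases "fst z < fst x"; cases "fst x < fst z") auto
  then show "x = z" using e unfolding cont_def by (simp add: prod_eq_iff)
qed

lemma fM_pos_iff: "finite M \<Longrightarrow> M \<noteq> {} \<Longrightarrow> 1 \<le> fM M c \<longleftrightarrow> c < Max M"
  using fM_pos[of M c] by (auto simp: Max_gr_iff)

lemma fM_0: "0 \<notin> M \<Longrightarrow> fM M 0 = card M"
proof -
  assume "0 \<notin> M"
  then have "{y\<in>M. 0 < y} = M" by (auto intro: gr0I)
  then show ?thesis unfolding fM_def by simp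
qed

lemma fM_le: "finite M \<Longrightarrow> M \<noteq> {} \<Longrightarrow> fM M c \<le> Max M - c"
proof -
  assume a: "finite M" "M \<noteq> {}"
  have "{y\<in>M. c < y} \<subseteq> {c<..Max M}" using a by auto
  then have "fM M c \<le> card {c<..Max M}" unfolding fM_def by (intro card_mono) auto
  then show ?thesis by simp
qed

lemma cont_rim_DM:
  assumes fin: "finite M" and ne: "M \<noteq> {}"
  shows "cont ` rim (DM M) = {1 - int (Max M) .. int (Max M) - 1}"
proof (intro equalityI subsetI)
  fix t assume "t \<in> cont ` rim (DM M)"
  then obtain i j where ij: "(i,j) \<in> rim (DM M)" "t = cont (i,j)" by auto
  then consider "1 \<le> i" "i \<le> j" "i = fM M (j - i)" | "1 \<le> j" "j < i" "j = fM M (i - j)"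
    unfolding DM_def rim_Dg by blast
  then show "t \<in> {1 - int (Max M) .. int (Max M) - 1}"
  proof cases
    case 1
    then have "1 \<le> fM M (j - i)" by metis
    then have "j - i < Max M" using fM_pos_iff[OF fin ne] by blast
    then show ?thesis using ij(2) 1 unfolding cont_def by auto
  next
    case 2
    then have "1 \<le> fM M (i - j)" by metis
    then have "i - j < Max M" using fM_pos_iff[OF fin ne] by blast
    then show ?thesis using ij(2) 2 unfolding cont_def by auto
  qed
next
  fix t assume t: "t \<in> {1 - int (Max M) .. int (Max M) - 1}"
  show "t \<in> cont ` rim (DM M)"
  proof (cases "0 \<le> t")
    case True
    define c where "c = nat t"
    have c: "c < Max M" using t True unfolding c_def by auto
    have "(fM M c, fM M c + c) \<in> rim (DM M)" unfolding DM_def rim_Dg using fM_pos_iff[OF fin ne] c by auto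
    moreover have "cont (fM M c, fM M c + c) = t" unfolding cont_def c_def using True by simp
    ultimately show ?thesis by (metis image_eqI)
  next
    case False
    define c where "c = nat (- t)"
    have c: "c < Max M" "0 < c" using t False unfolding c_def by auto
    have "(fM M c + c, fM M c) \<in> rim (DM M)" unfolding DM_def rim_Dg using fM_pos_iff[OF fin ne] c by auto
    moreover have "cont (fM M c + c, fM M c) = t" unfolding cont_def c_def using False by simp
    ultimately show ?thesis by (metis image_eqI)
  qed
qed

lemma label_DM:
  assumes fin: "finite M" and ne: "M \<noteq> {}" and x: "x \<in> rim (DM M)"
  shows "int (rim_label (DM M) x) = int (Max M) - cont x"
proof -
  let ?D = "DM M"
  have y: "young ?D" using young_DM[OF fin] .
  have "cont x \<in> {1 - int (Max M) .. int (Max M) - 1}" using cont_rim_DM[OF fin ne] x by blast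
  have "card {z\<in>rim ?D. cont x < cont z} = card (cont ` {z\<in>rim ?D. cont x < cont z})"
    using rim_cont_inj[OF y] by (intro card_image[symmetric]) (auto intro: inj_on_subset)
  also have "cont ` {z\<in>rim ?D. cont x < cont z} = {t \<in> cont ` rim ?D. cont x < t}" by auto
  also have "\<dots> = {cont x + 1 .. int (Max M) - 1}" unfolding cont_rim_DM[OF fin ne]
    using \<open>cont x \<in> _\<close> by auto
  finally have "card {z\<in>rim ?D. cont x < cont z} = nat (int (Max M) - 1 - cont x)" by simp
  then show ?thesis using rim_label_cont[OF y x] \<open>cont x \<in> _\<close> by simp
qed

lemma rim_DM_up:
  assumes fin: "finite M" and ne: "M \<noteq> {}" and c: "c < Max M"
  shows "(fM M c, fM M c + c) \<in> rim (DM M)" "rim_label (DM M) (fM M c, fM M c + c) = Max M - c"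
proof -
  show r: "(fM M c, fM M c + c) \<in> rim (DM M)" unfolding DM_def rim_Dg using fM_pos_iff[OF fin ne] c by auto
  have "int (rim_label (DM M) (fM M c, fM M c + c)) = int (Max M) - int c"
    using label_DM[OF fin ne r] unfolding cont_def by simp
  then show "rim_label (DM M) (fM M c, fM M c + c) = Max M - c" using c by simp
qed

lemma rim_DM_low:
  assumes fin: "finite M" and ne: "M \<noteq> {}" and c: "c < Max M" "0 < c"
  shows "(fM M c + c, fM M c) \<in> rim (DM M)" "rim_label (DM M) (fM M c + c, fM M c) = Max M + c"
proof -
  show r: "(fM M c + c, fM M c) \<in> rim (DM M)" unfolding DM_def rim_Dg using fM_pos_iff[OF fin ne] c by auto
  have "int (rim_label (DM M) (fM M c + c, fM M c)) = int (Max M) + int c"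
    using label_DM[OF fin ne r] unfolding cont_def by simp
  then show "rim_label (DM M) (fM M c + c, fM M c) = Max M + c" by simp
qed

lemma rim_DM_cases:
  assumes "x \<in> rim (DM M)"
  obtains c where "x = (fM M c, fM M c + c)" "1 \<le> fM M c"
  | c where "x = (fM M c + c, fM M c)" "0 < c" "1 \<le> fM M c"
proof -
  obtain i j where ij: "x = (i,j)" by (cases x)
  have "(i,j) \<in> rim (Dg (fM M))" using assms ij DM_def by simp
  then consider "1 \<le> i" "i \<le> j" "i = fM M (j - i)" | "1 \<le> j" "j < i" "j = fM M (i - j)"
    unfolding rim_Dg by blast
  then show ?thesis
  proof cases
    case 1
    have e: "x = (fM M (j - i), fM M (j - i) + (j - i))" using ij 1 by simp
    have "1 \<le> fM M (j - i)" using 1 by metis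
    then show ?thesis using that(1)[OF e] by blast
  next
    case 2
    have e: "x = (fM M (i - j) + (i - j), fM M (i - j))" using ij 2 by simp
    have "1 \<le> fM M (i - j)" using 2 by metis
    then show ?thesis using that(2)[OF e] 2 by simp
  qed
qed

lemma rows_DM:
  assumes fin: "finite M" and ne: "M \<noteq> {}" and nz: "0 \<notin> M"
  shows "{i. \<exists>j. (i,j) \<in> DM M} = {1..Max M}"
proof -
  have cM: "card M \<le> Max M"
  proof -
    have "M \<subseteq> {1..Max M}" using fin nz by (auto intro: gr0I simp: Suc_le_eq)
    then show ?thesis by (metis card_atLeastAtMost card_mono diff_Suc_1 finite_atLeastAtMost)
  qed
  show "{i. \<exists>j. (i,j) \<in> DM M} = {1..Max M}"
  proof (intro equalityI subsetI)
    fix i assume "i \<in> {i. \<exists>j. (i,j) \<in> DM M}"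
    then obtain j where j: "(i,j) \<in> Dg (fM M)" unfolding DM_def by blast
    show "i \<in> {1..Max M}"
    proof (cases "i \<le> j")
      case True
      then have "1 \<le> i" "i \<le> fM M (j - i)" using j unfolding Dg_def by auto
      moreover have "fM M (j - i) \<le> fM M 0" using fM_antimono[OF fin] by simp
      ultimately show ?thesis using fM_0[OF nz] cM by simp
    next
      case False
      then have "1 \<le> j" "j \<le> fM M (i - j)" using j unfolding Dg_def by auto
      then show ?thesis using fM_le[OF fin ne, of "i - j"] False by simp
    qed
  next
    fix i assume i: "i \<in> {1..Max M}"
    have "Max M \<in> M" using fin ne by simp
    then have "0 < Max M" using nz by (metis gr0I)
    show "i \<in> {i. \<exists>j. (i,j) \<in> DM M}"
    proof (cases "i = 1")
      case True
      have "(1, 1 + 0) \<in> Dg (fM M)" unfolding Dg_diag using fM_pos_iff[OF fin ne] \<open>0 < Max M\<close> by simp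
      then show ?thesis using True unfolding DM_def by auto
    next
      case False
      have "(i, 1) \<in> Dg (fM M)" unfolding Dg_def using fM_pos_iff[OF fin ne, of "i - 1"] i False by auto
      then show ?thesis unfolding DM_def by auto
    qed
  qed
qed

lemma num_rows_DM:
  assumes fin: "finite M" and ne: "M \<noteq> {}" and nz: "0 \<notin> M"
  shows "num_rows (DM M) = Max M"
  unfolding num_rows_def rows_DM[OF assms] by simp

lemma row_has_rim:
  assumes y: "young D" and rD: "(r, j) \<in> D"
  shows "\<exists>j'. (r, j') \<in> rim D"
proof -
  let ?J = "{j. (r, j) \<in> D}"
  have finJ: "finite ?J"
  proof -
    have "?J \<subseteq> snd ` D" by force
    then show ?thesis using young_finite[OF y] finite_subset by blast
  qed
  have neJ: "?J \<noteq> {}" using rD by blast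
  let ?m = "Max ?J"
  have m: "(r, ?m) \<in> D" using Max_in[OF finJ neJ] by simp
  have "(r + 1, ?m + 1) \<notin> D"
  proof
    assume "(r + 1, ?m + 1) \<in> D"
    moreover have "1 \<le> r" using young_pos[OF y rD] by simp
    ultimately have "(r, ?m + 1) \<in> D" using young_down[OF y, of "r+1" "?m+1" r "?m+1"] by simp
    then have "?m + 1 \<le> ?m" using finJ by simp
    then show False by simp
  qed
  then show ?thesis using m unfolding rim_def by blast
qed

lemma has_nxt_gt': "has_nxt p M X \<Longrightarrow> p \<le> X"
  unfolding has_nxt_def by auto

lemma nxt_fM:
  assumes fin: "finite M" and h: "has_nxt p M X"
  shows "fM M (nxt p M X) = fM M (X - p)"
proof -
  have "{y\<in>M. nxt p M X < y} = {y\<in>M. X - p < y}"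
  proof (intro Collect_cong conj_cong refl iffI)
    fix y assume yy: "y \<in> M" "nxt p M X < y"
    show "X - p < y"
    proof (rule ccontr)
      assume "\<not> X - p < y"
      then have "y + p \<le> X" using has_nxt_gt' [OF h] by simp
      then show False using nxt_props(3)[OF fin h yy(1)] yy(2) by simp
    qed
  next
    fix y assume "y \<in> M" "X - p < y"
    then show "nxt p M X < y" using nxt_props(2)[OF fin h] by linarith
  qed
  then show ?thesis unfolding fM_def by simp
qed

lemma row_min_label:
  assumes fin: "finite M" and nz: "0 \<notin> M" and Y: "Y \<in> M"
  shows "{y\<in>rim (DM M). fst y = fM M Y + 1} \<noteq> {}"
    "Min (rim_label (DM M) ` {y\<in>rim (DM M). fst y = fM M Y + 1}) = Max M + 1 - Y"
proof -
  have ne: "M \<noteq> {}" using Y by blast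
  have Y1: "1 \<le> Y" using Y nz by (metis less_one not_le)
  have Yn: "Y \<le> Max M" using Y fin by simp
  have fY: "fM M (Y - 1) = fM M Y + 1" using fM_Suc[OF fin, of "Y - 1"] Y Y1 by simp
  let ?R = "{y\<in>rim (DM M). fst y = fM M Y + 1}"
  have y0: "(fM M (Y - 1), fM M (Y - 1) + (Y - 1)) \<in> rim (DM M)"
    "rim_label (DM M) (fM M (Y - 1), fM M (Y - 1) + (Y - 1)) = Max M - (Y - 1)"
    using rim_DM_up[OF fin ne, of "Y - 1"] Y1 Yn by auto
  have y0R: "(fM M (Y - 1), fM M (Y - 1) + (Y - 1)) \<in> ?R" using y0 fY by simp
  then show "?R \<noteq> {}" by blast
  have finR: "finite ?R"
  proof -
    have "?R \<subseteq> DM M" unfolding rim_def by auto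
    then show ?thesis using young_finite[OF young_DM[OF fin]] finite_subset by blast
  qed
  show "Min (rim_label (DM M) ` ?R) = Max M + 1 - Y"
  proof (rule antisym)
    show "Min (rim_label (DM M) ` ?R) \<le> Max M + 1 - Y"
      using y0R y0(2) finR Y1 Yn by (metis (no_types, lifting) Min_le finite_imageI image_eqI Nat.diff_diff_right le_add2 add.commute)
    show "Max M + 1 - Y \<le> Min (rim_label (DM M) ` ?R)"
    proof (rule Min.boundedI)
      show "finite (rim_label (DM M) ` ?R)" using finR by simp
      show "rim_label (DM M) ` ?R \<noteq> {}" using y0R by blast
      fix l assume "l \<in> rim_label (DM M) ` ?R"
      then obtain y where y: "y \<in> rim (DM M)" "fst y = fM M Y + 1" "l = rim_label (DM M) y" by blast
      from y(1) show "Max M + 1 - Y \<le> l"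
      proof (cases rule: rim_DM_cases)
        case (1 c)
        have "c < Y"
        proof (rule ccontr)
          assume "\<not> c < Y"
          then have "fM M c \<le> fM M Y" using fM_antimono[OF fin] by simp
          then show False using y(2) 1 by simp
        qed
        have "c < Max M" using 1 fM_pos_iff[OF fin ne] by simp
        then show ?thesis using rim_DM_up(2)[OF fin ne \<open>c < Max M\<close>] y(3) 1 \<open>c < Y\<close> by simp
      next
        case (2 c)
        have "c < Max M" using 2 fM_pos_iff[OF fin ne] by simp
        then show ?thesis using rim_DM_low(2)[OF fin ne \<open>c < Max M\<close> 2(2)] y(3) 2 by simp
      qed
    qed
  qed
qed



lemma label_lt_of_row:
  assumes fin: "finite M" and ne: "M \<noteq> {}" and x: "x \<in> rim (DM M)" and y: "y \<in> rim (DM M)"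
    and lt: "fst x < fst y"
  shows "rim_label (DM M) x < rim_label (DM M) y"
proof -
  have "cont y < cont x" using rim_order[OF young_DM[OF fin] y x lt] .
  then show ?thesis using label_DM[OF fin ne x] label_DM[OF fin ne y] by simp
qed

lemma U1:
  assumes fin: "finite M" and ne: "M \<noteq> {}" and nz: "0 \<notin> M" and p0: "0 < p"
    and ps: "pseg_start (DM M) p s"
  shows "s \<le> Max M \<Longrightarrow> \<exists>X\<in>Ch p M. s = Max M + 1 - X"
  using ps
proof (induction rule: pseg_start.induct)
  case first
  then show ?case using Max_in_Ch[OF fin ne] by (intro bexI[of _ "Max M"]) auto
next
  case (step s x)
  let ?D = "DM M"
  let ?n = "Max M"
  let ?f = "fM M"
  let ?R = "{y\<in>rim ?D. fst y = fst x + 1}"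
  let ?s' = "Min (rim_label ?D ` ?R)"
  have yD: "young ?D" using young_DM[OF fin] .
  have xr: "x \<in> rim ?D" "s \<le> rim_label ?D x" "rim_label ?D x \<le> s + p - 1"
    using step.hyps(2) unfolding pseg_def by auto
  have xD: "x \<in> ?D" using xr(1) unfolding rim_def by auto
  have "fst x \<in> {i. \<exists>j. (i,j) \<in> ?D}" using xD by (cases x) auto
  then have "fst x \<le> ?n" using rows_DM[OF fin ne nz] by auto
  then have r: "fst x + 1 \<le> ?n" using step.hyps(4) num_rows_DM[OF fin ne nz] by simp
  then have "fst x + 1 \<in> {i. \<exists>j. (i,j) \<in> ?D}" using rows_DM[OF fin ne nz] by auto
  then obtain j where "(fst x + 1, j) \<in> ?D" by blast
  then obtain j' where "(fst x + 1, j') \<in> rim ?D" using row_has_rim[OF yD] by blast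
  then have neR: "?R \<noteq> {}" by force
  have finR: "finite ?R"
  proof -
    have "?R \<subseteq> ?D" unfolding rim_def by auto
    then show ?thesis using young_finite[OF yD] finite_subset by blast
  qed
  have "?s' \<in> rim_label ?D ` ?R" using Min_in[of "rim_label ?D ` ?R"] finR neR by simp
  then obtain y0 where y0R: "y0 \<in> ?R" and y03: "rim_label ?D y0 = ?s'" by (rule imageE) simp
  have y0: "y0 \<in> rim ?D" "fst y0 = fst x + 1" "rim_label ?D y0 = ?s'" using y0R y03 by auto
  have lxy: "rim_label ?D x < rim_label ?D y0" using label_lt_of_row[OF fin ne xr(1) y0(1)] y0(2) by simp
  then have lxn: "rim_label ?D x < ?n" using y0(3) step.prems by simp
  then have "s \<le> ?n" using xr(2) by simp
  then obtain X where X: "X \<in> Ch p M" "s = ?n + 1 - X" using step.IH by blast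
  have XM: "X \<in> M" using X(1) Ch_sub[OF fin] by blast
  have Xn: "X \<le> ?n" "1 \<le> X" using XM fin apply simp using XM nz by (metis less_one not_le)
  from xr(1) obtain c where xc: "x = (?f c, ?f c + c)" "1 \<le> ?f c"
  proof (cases rule: rim_DM_cases)
    case (2 c)
    have "c < ?n" using 2 fM_pos_iff[OF fin ne] by simp
    then show ?thesis using rim_DM_low(2)[OF fin ne \<open>c < ?n\<close> 2(2)] lxn 2 by simp
  qed
  have cn: "c < ?n" using xc(2) fM_pos_iff[OF fin ne] by simp
  have lx: "rim_label ?D x = ?n - c" using rim_DM_up(2)[OF fin ne cn] xc by simp
  have c1: "1 \<le> c" using lx lxn by simp
  have lxeq: "rim_label ?D x = s + p - 1"
  proof (rule ccontr)
    assume "rim_label ?D x \<noteq> s + p - 1"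
    then have lt: "rim_label ?D x < s + p - 1" using xr(3) by simp
    let ?z = "(?f (c - 1), ?f (c - 1) + (c - 1))"
    have z: "?z \<in> rim ?D" "rim_label ?D ?z = ?n - (c - 1)" using rim_DM_up[OF fin ne, of "c - 1"] cn by auto
    have b1: "?n - (c - 1) \<le> s + p - 1" using lt lx c1 cn by linarith
    have b2: "s \<le> ?n - (c - 1)" using lx xr(2) c1 cn by linarith
    have "?z \<in> pseg ?D p s" unfolding pseg_def using z b1 b2 by simp
    then have "rim_label ?D ?z \<le> rim_label ?D x" using step.hyps(3) by blast
    then show False using z(2) lx c1 cn by simp
  qed
  have cX: "c + p = X" using lxeq lx X(2) Xn cn c1 p0 by linarith
  from y0(1) obtain c0 where y0c: "y0 = (?f c0, ?f c0 + c0)" "1 \<le> ?f c0"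
  proof (cases rule: rim_DM_cases)
    case (2 c')
    have "c' < ?n" using 2 fM_pos_iff[OF fin ne] by simp
    then show ?thesis using rim_DM_low(2)[OF fin ne \<open>c' < ?n\<close> 2(2)] step.prems y0(3) 2 by simp
  qed
  have fc0: "?f c0 = ?f c + 1" using y0c y0(2) xc by simp
  have "c0 < c"
  proof (rule ccontr)
    assume "\<not> c0 < c"
    then have "?f c0 \<le> ?f c" using fM_antimono[OF fin] by simp
    then show False using fc0 by simp
  qed
  have hn: "has_nxt p M X"
  proof -
    have "card {y\<in>M. c0 < y} \<noteq> card {y\<in>M. c < y}" using fc0 unfolding fM_def by simp
    then have "{y\<in>M. c0 < y} \<noteq> {y\<in>M. c < y}" by metis
    then obtain Y where "Y \<in> M" "c0 < Y" "\<not> c < Y" using \<open>c0 < c\<close> by auto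
    then show ?thesis unfolding has_nxt_def using cX by (intro bexI[of _ Y]) auto
  qed
  have fn: "?f (nxt p M X) = ?f c" using nxt_fM[OF fin hn] cX by (metis add_diff_cancel_right')
  have "?s' = ?n + 1 - nxt p M X"
    using row_min_label(2)[OF fin nz nxt_props(1)[OF fin hn]] fn xc by simp
  then show ?case using nxt_in_Ch[OF fin X(1)] by blast
qed

lemma card_le_Max: "finite M \<Longrightarrow> 0 \<notin> M \<Longrightarrow> card M \<le> Max M"
proof -
  assume fin: "finite M" and nz: "0 \<notin> M"
  have "M \<subseteq> {1..Max M}" using fin nz by (auto intro: gr0I simp: Suc_le_eq)
  then show ?thesis by (metis card_atLeastAtMost card_mono diff_Suc_1 finite_atLeastAtMost)
qed

lemma U2:
  assumes fin: "finite M" and ne: "M \<noteq> {}" and nz: "0 \<notin> M" and p0: "0 < p"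
  shows "pseg_start (DM M) p (Max M + 1 - dseq p M j)"
proof (induction j)
  case 0
  have "pseg_start (DM M) p 1" by (rule pseg_start.first)
  then show ?case by (simp add: dseq_0)
next
  case (Suc j)
  let ?X = "dseq p M j"
  let ?n = "Max M"
  let ?f = "fM M"
  let ?D = "DM M"
  show ?case
  proof (cases "has_nxt p M ?X")
    case False
    then show ?thesis using Suc.IH by (simp add: dseq_Suc nxt_def)
  next
    case True
    let ?Y = "nxt p M ?X"
    let ?c = "?X - p"
    let ?s = "?n + 1 - ?X"
    have XM: "?X \<in> M" using dseq_in[OF fin ne] .
    have Xn: "?X \<le> ?n" using XM fin by simp
    have YM: "?Y \<in> M" and Yp: "?Y + p \<le> ?X" using nxt_props[OF fin True] by auto
    have Y1: "1 \<le> ?Y" using YM nz by (metis less_one not_le)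
    have cn: "?c < ?n" using Yp Xn p0 by linarith
    let ?x = "(?f ?c, ?f ?c + ?c)"
    have x: "?x \<in> rim ?D" "rim_label ?D ?x = ?n - ?c" using rim_DM_up[OF fin ne cn] by auto
    have lx: "rim_label ?D ?x = ?s + p - 1" using x(2) Yp Xn Y1 by linarith
    have "?s \<le> ?s + p - 1" using p0 by simp
    then have xps: "?x \<in> pseg ?D p ?s" unfolding pseg_def using x(1) lx by simp
    have mx: "\<forall>y\<in>pseg ?D p ?s. rim_label ?D y \<le> rim_label ?D ?x" unfolding pseg_def lx by auto
    have "?f ?c < card M"
    proof -
      have "?Y \<le> ?c" using Yp by simp
      then have "?Y \<notin> {y\<in>M. ?c < y}" by simp
      then have "{y\<in>M. ?c < y} \<subset> M" using YM by blast
      then show ?thesis unfolding fM_def using fin by (intro psubset_card_mono) auto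
    qed
    then have "fst ?x \<noteq> num_rows ?D" using num_rows_DM[OF fin ne nz] card_le_Max[OF fin nz] by simp
    from pseg_start.step[OF Suc.IH xps mx this]
    have "pseg_start ?D p (Min (rim_label ?D ` {y\<in>rim ?D. fst y = fst ?x + 1}))" .
    moreover have "?f ?Y = ?f ?c" using nxt_fM[OF fin True] .
    then have "Min (rim_label ?D ` {y\<in>rim ?D. fst y = fst ?x + 1}) = ?n + 1 - ?Y"
      using row_min_label(2)[OF fin nz YM] by simp
    ultimately show ?thesis by (simp add: dseq_Suc)
  qed
qed

lemma DM_empty: "DM {} = {}"
  unfolding DM_def Dg_def fM_def by auto

lemma U_star_DM:
  assumes fin: "finite M" and nz: "0 \<notin> M" and p0: "0 < p"
  shows "U_star (DM M) p = (\<lambda>c. (fM M c, fM M c + c)) ` Cc p M"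
proof (cases "M = {}")
  case True
  have "rim {} = {}" unfolding rim_def by simp
  then have "prim {} p = {}" unfolding prim_def pseg_def by simp
  then show ?thesis using True unfolding U_star_def Cc_def Ch_def by (simp add: DM_empty)
next
  case False
  note ne = False
  let ?n = "Max M"
  let ?f = "fM M"
  let ?D = "DM M"
  show ?thesis
  proof (intro equalityI subsetI)
    fix x assume "x \<in> U_star ?D p"
    then obtain i j where ij: "x = (i,j)" "(i,j) \<in> prim ?D p" "i \<le> j" unfolding U_star_def by blast
    then obtain s where s: "pseg_start ?D p s" "(i,j) \<in> pseg ?D p s" unfolding prim_def by blast
    have r: "(i,j) \<in> rim ?D" "s \<le> rim_label ?D (i,j)" "rim_label ?D (i,j) \<le> s + p - 1"
      using s(2) unfolding pseg_def by auto
    from r(1) obtain c where c: "(i,j) = (?f c, ?f c + c)" "1 \<le> ?f c"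
    proof (cases rule: rim_DM_cases)
      case (2 c)
      then show ?thesis using ij(3) by simp
    qed
    have cn: "c < ?n" using c(2) fM_pos_iff[OF fin ne] by simp
    have l: "rim_label ?D (i,j) = ?n - c" using rim_DM_up(2)[OF fin ne cn] c(1) by simp
    obtain X where X: "X \<in> Ch p M" "s = ?n + 1 - X" using U1[OF fin ne nz p0 s(1)] r(2) l by fastforce
    have Xn: "X \<le> ?n" using X(1) Ch_le_Max[OF fin] by blast
    have "c < X" "X \<le> c + p" using r(2,3) l X(2) Xn cn p0 by linarith+
    then have "c \<in> Cc p M" unfolding Cc_def using X(1) by blast
    then show "x \<in> (\<lambda>c. (?f c, ?f c + c)) ` Cc p M" using ij(1) c(1) by auto
  next
    fix x assume "x \<in> (\<lambda>c. (?f c, ?f c + c)) ` Cc p M"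
    then obtain c X where c: "x = (?f c, ?f c + c)" "X \<in> Ch p M" "c < X" "X \<le> c + p"
      unfolding Cc_def by blast
    have Xn: "X \<le> ?n" using c(2) Ch_le_Max[OF fin] by blast
    have cn: "c < ?n" using c Xn by simp
    obtain j where j: "X = dseq p M j" using c(2) ne unfolding Ch_def by auto
    have ps: "pseg_start ?D p (?n + 1 - X)" using U2[OF fin ne nz p0, of j] j by simp
    have xr: "x \<in> rim ?D" "rim_label ?D x = ?n - c" using rim_DM_up[OF fin ne cn] c(1) by auto
    have "x \<in> pseg ?D p (?n + 1 - X)" unfolding pseg_def using xr c(3,4) Xn cn p0 by auto
    then have "x \<in> prim ?D p" unfolding prim_def using ps by blast
    then show "x \<in> U_star ?D p" unfolding U_star_def using c(1) by auto
  qed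
qed



lemma Ch_gap:
  assumes fin: "finite M" and X: "X \<in> Ch p M" and X': "X' \<in> Ch p M" and lt: "X' < X"
  shows "X' + p \<le> X"
proof -
  have "X \<noteq> Min (Ch p M)" using X' lt Ch_finite[OF fin] by (metis Min_le leD)
  then have hn: "has_nxt p M X" using no_nxt_is_Min[OF fin X] by blast
  have "X' \<le> nxt p M X" using Ch_between[OF fin X hn X'] lt by simp
  then show ?thesis using nxt_props(2)[OF fin hn] by simp
qed

lemma Ch_I_unique:
  assumes fin: "finite M" and "X \<in> Ch p M" "X' \<in> Ch p M" "c < X" "X \<le> c + p" "c < X'" "X' \<le> c + p"
  shows "X = X'"
proof (rule ccontr)
  assume "X \<noteq> X'"
  then consider "X' < X" | "X < X'" by linarith
  then show False
  proof cases
    case 1 then show False using Ch_gap[OF fin assms(2,3) 1] assms by simp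
  next
    case 2 then show False using Ch_gap[OF fin assms(3,2) 2] assms by simp
  qed
qed

lemma fM_Fm:
  assumes fin: "finite M"
  shows "fM M c = fM (Fm p M) c + (if c \<in> Cc p M then 1 else 0)"
proof -
  let ?Ch = "Ch p M"
  have finCh: "finite ?Ch" using Ch_finite[OF fin] .
  let ?S = "(\<lambda>X. X - p) ` {X\<in>?Ch. p < X}"
  have Fm_eq: "Fm p M = (M - ?Ch) \<union> ?S" unfolding Fm_def by auto
  have A: "{y\<in>Fm p M. c < y} = {y\<in>M - ?Ch. c < y} \<union> (\<lambda>X. X - p) ` {X\<in>?Ch. c + p < X}"
    unfolding Fm_eq by force
  have disjA: "{y\<in>M - ?Ch. c < y} \<inter> (\<lambda>X. X - p) ` {X\<in>?Ch. c + p < X} = {}"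
  proof -
    have "X - p \<notin> M - ?Ch" if "X \<in> ?Ch" "c + p < X" for X
      using Ch_sub_p[OF fin that(1)] that by auto
    then show ?thesis by auto
  qed
  have injA: "inj_on (\<lambda>X. X - p) {X\<in>?Ch. c + p < X}" by (intro inj_onI) auto
  have cardA: "card {y\<in>Fm p M. c < y} = card {y\<in>M - ?Ch. c < y} + card {X\<in>?Ch. c + p < X}"
    unfolding A using disjA injA fin finCh by (subst card_Un_disjoint) (auto simp: card_image)
  have B: "{y\<in>M. c < y} = {y\<in>M - ?Ch. c < y} \<union> ({X\<in>?Ch. c + p < X} \<union> {X\<in>?Ch. c < X \<and> X \<le> c + p})"
    using Ch_sub[OF fin] by auto
  have cardB: "card {y\<in>M. c < y} = card {y\<in>M - ?Ch. c < y} + (card {X\<in>?Ch. c + p < X} + card {X\<in>?Ch. c < X \<and> X \<le> c + p})"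
    unfolding B using fin finCh by (subst card_Un_disjoint, simp, simp, force) (subst card_Un_disjoint, auto)
  have cardC: "card {X\<in>?Ch. c < X \<and> X \<le> c + p} = (if c \<in> Cc p M then 1 else 0)"
  proof (cases "c \<in> Cc p M")
    case True
    then obtain X0 where X0: "X0 \<in> ?Ch" "c < X0" "X0 \<le> c + p" unfolding Cc_def by blast
    have "{X\<in>?Ch. c < X \<and> X \<le> c + p} = {X0}" using Ch_I_unique[OF fin _ X0(1) _ _ X0(2,3)] X0 by blast
    then show ?thesis using True by simp
  next
    case False
    then have "{X\<in>?Ch. c < X \<and> X \<le> c + p} = {}" unfolding Cc_def by blast
    then show ?thesis using False by simp
  qed
  show ?thesis unfolding fM_def using cardA cardB cardC by simp
qed

lemma Cc_finite: "finite M \<Longrightarrow> finite (Cc p M)"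
proof -
  assume fin: "finite M"
  have "Cc p M \<subseteq> {..Max M}"
  proof
    fix c assume "c \<in> Cc p M"
    then obtain X where "X \<in> Ch p M" "c < X" unfolding Cc_def by blast
    then show "c \<in> {..Max M}" using Ch_le_Max[OF fin] by fastforce
  qed
  then show ?thesis using finite_subset by blast
qed

lemma Cc_pos: "finite M \<Longrightarrow> c \<in> Cc p M \<Longrightarrow> 1 \<le> fM M c"
  using fM_Fm[of M c p] by simp

lemma r_star_DM:
  assumes fin: "finite M" and nz: "0 \<notin> M" and p0: "0 < p"
  shows "r_star (DM M) p = card (Cc p M)"
proof -
  have "inj_on (\<lambda>c. (fM M c, fM M c + c)) (Cc p M)" by (intro inj_onI) auto
  then show ?thesis unfolding r_star_def U_star_DM[OF assms] by (simp add: card_image)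
qed

lemma a_star_DM:
  assumes fin: "finite M" and nz: "0 \<notin> M" and p0: "0 < p"
  shows "a_star (DM M) p = 2 * card (Cc p M) - (if 0 \<in> Cc p M then 1 else 0)"
proof -
  let ?u = "\<lambda>c. (fM M c, fM M c + c)"
  let ?U = "?u ` Cc p M"
  let ?V = "(\<lambda>(i,j). (j,i)) ` ?U"
  have US: "U_star (DM M) p = ?U" using U_star_DM[OF assms] .
  have RS: "rim_star (DM M) p = ?U \<union> ?V" unfolding rim_star_def US by force
  have finC: "finite (Cc p M)" using Cc_finite[OF fin] .
  have injU: "inj_on ?u (Cc p M)" by (intro inj_onI) auto
  have cU: "card ?U = card (Cc p M)" using injU by (simp add: card_image)
  have cV: "card ?V = card ?U" by (intro card_image) (auto intro: inj_onI)
  have IV: "?U \<inter> ?V = (if 0 \<in> Cc p M then {(fM M 0, fM M 0)} else {})"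
  proof (intro equalityI subsetI)
    fix x assume "x \<in> ?U \<inter> ?V"
    then obtain c c' where cc: "c \<in> Cc p M" "c' \<in> Cc p M" "x = ?u c" "x = (fM M c' + c', fM M c')" by force
    then have "c = 0" by simp
    then show "x \<in> (if 0 \<in> Cc p M then {(fM M 0, fM M 0)} else {})" using cc by simp
  next
    fix x assume "x \<in> (if 0 \<in> Cc p M then {(fM M 0, fM M 0)} else {})"
    then have "0 \<in> Cc p M" "x = (fM M 0, fM M 0)" by (auto split: if_splits)
    moreover have "?u 0 \<in> ?U" using calculation(1) by (rule imageI)
    moreover have "(\<lambda>(i,j). (j,i)) (?u 0) \<in> ?V" using calculation(3) by (rule imageI)
    ultimately show "x \<in> ?U \<inter> ?V" by simp
  qed
  have "card (?U \<union> ?V) + card (?U \<inter> ?V) = card ?U + card ?V"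
    using card_Un_Int[of ?U ?V] finC by simp
  then show ?thesis unfolding a_star_def RS using cU cV IV by (auto split: if_splits)
qed

lemma eps_star_DM:
  assumes fin: "finite M" and nz: "0 \<notin> M" and p0: "0 < p"
  shows "eps_star (DM M) p = (if 0 \<in> Cc p M then 1 else 0)"
proof (cases "0 \<in> Cc p M")
  case True
  then have "card (Cc p M) \<ge> 1" using Cc_finite[OF fin] by (metis One_nat_def Suc_leI card_gt_0_iff empty_iff)
  then have "a_star (DM M) p = 2 * (card (Cc p M) - 1) + 1" using a_star_DM[OF assms] True by simp
  then show ?thesis unfolding eps_star_def using True by simp
next
  case False
  then show ?thesis unfolding eps_star_def using a_star_DM[OF assms] by simp
qed

lemma lam1_DM:
  assumes fin: "finite M" and nz: "0 \<notin> M" and p0: "0 < p"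
  shows "lam1_star (DM M) p = DM (Fm p M)"
proof -
  let ?f = "fM M"
  let ?g = "fM (Fm p M)"
  let ?u = "\<lambda>c. (fM M c, fM M c + c)"
  have RS: "rim_star (DM M) p = ?u ` Cc p M \<union> (\<lambda>(i,j). (j,i)) ` (?u ` Cc p M)"
    unfolding rim_star_def U_star_DM[OF assms] by force
  have g: "?g c = ?f c - (if c \<in> Cc p M then 1 else 0)" for c using fM_Fm[OF fin, of c p] by simp
  have memRS: "(i,j) \<in> rim_star (DM M) p \<longleftrightarrow>
      (i \<le> j \<and> j - i \<in> Cc p M \<and> i = ?f (j - i)) \<or> (j \<le> i \<and> i - j \<in> Cc p M \<and> j = ?f (i - j))" for i j
  proof
    assume "(i,j) \<in> rim_star (DM M) p"
    then show "(i \<le> j \<and> j - i \<in> Cc p M \<and> i = ?f (j - i)) \<or> (j \<le> i \<and> i - j \<in> Cc p M \<and> j = ?f (i - j))"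
      unfolding RS by auto
  next
    assume h: "(i \<le> j \<and> j - i \<in> Cc p M \<and> i = ?f (j - i)) \<or> (j \<le> i \<and> i - j \<in> Cc p M \<and> j = ?f (i - j))"
    then show "(i,j) \<in> rim_star (DM M) p"
    proof
      assume a: "i \<le> j \<and> j - i \<in> Cc p M \<and> i = ?f (j - i)"
      then have "(i,j) = ?u (j - i)" by auto
      then show ?thesis unfolding RS using a by blast
    next
      assume a: "j \<le> i \<and> i - j \<in> Cc p M \<and> j = ?f (i - j)"
      then have "(i,j) = (\<lambda>(i,j). (j,i)) (?u (i - j))" by auto
      then show ?thesis unfolding RS using a by blast
    qed
  qed
  show ?thesis
  proof (intro equalityI subsetI)
    fix x assume x: "x \<in> lam1_star (DM M) p"
    obtain i j where ij: "x = (i,j)" by (cases x)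
    have inD: "(i,j) \<in> Dg ?f" and nR: "(i,j) \<notin> rim_star (DM M) p" using x ij unfolding lam1_star_def DM_def by auto
    show "x \<in> DM (Fm p M)"
    proof (cases "i \<le> j")
      case True
      then have a: "1 \<le> i" "i \<le> ?f (j - i)" using inD unfolding Dg_def by auto
      have "j - i \<in> Cc p M \<Longrightarrow> i \<noteq> ?f (j - i)" using nR memRS True by blast
      then have "i \<le> ?g (j - i)" using a g[of "j - i"] by (auto split: if_splits)
      then show ?thesis using ij a True unfolding DM_def Dg_def by auto
    next
      case False
      then have a: "1 \<le> j" "j \<le> ?f (i - j)" using inD unfolding Dg_def by auto
      have "i - j \<in> Cc p M \<Longrightarrow> j \<noteq> ?f (i - j)" using nR memRS False by auto
      then have "j \<le> ?g (i - j)" using a g[of "i - j"] by (auto split: if_splits)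
      then show ?thesis using ij a False unfolding DM_def Dg_def by auto
    qed
  next
    fix x assume x: "x \<in> DM (Fm p M)"
    obtain i j where ij: "x = (i,j)" by (cases x)
    show "x \<in> lam1_star (DM M) p"
    proof (cases "i \<le> j")
      case True
      then have a: "1 \<le> i" "i \<le> ?g (j - i)" using x ij unfolding DM_def Dg_def by auto
      then have b: "i \<le> ?f (j - i)" "j - i \<in> Cc p M \<Longrightarrow> i \<noteq> ?f (j - i)" using g[of "j - i"] by (auto split: if_splits)
      have "(i,j) \<notin> rim_star (DM M) p"
      proof
        assume "(i,j) \<in> rim_star (DM M) p"
        then show False using memRS b True by (metis diff_self_eq_0 le_antisym)
      qed
      moreover have "(i,j) \<in> DM M" using a b True unfolding DM_def Dg_def by auto
      ultimately show ?thesis using ij unfolding lam1_star_def by simp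
    next
      case False
      then have a: "1 \<le> j" "j \<le> ?g (i - j)" using x ij unfolding DM_def Dg_def by auto
      then have b: "j \<le> ?f (i - j)" "i - j \<in> Cc p M \<Longrightarrow> j \<noteq> ?f (i - j)" using g[of "i - j"] by (auto split: if_splits)
      have "(i,j) \<notin> rim_star (DM M) p"
      proof
        assume "(i,j) \<in> rim_star (DM M) p"
        then show False using memRS b False by auto
      qed
      moreover have "(i,j) \<in> DM M" using a b False unfolding DM_def Dg_def by auto
      ultimately show ?thesis using ij unfolding lam1_star_def by simp
    qed
  qed
qed



definition mu :: "nat set \<Rightarrow> nat \<Rightarrow> nat" where
  "mu M i = card {c. i \<le> fM M c}"

lemma down_closed_card:
  fixes S :: "nat set"
  assumes "finite S" "\<And>c c'. c \<in> S \<Longrightarrow> c' \<le> c \<Longrightarrow> c' \<in> S"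
  shows "S = {..<card S}"
proof (cases "S = {}")
  case False
  have "S = {..Max S}"
  proof
    show "S \<subseteq> {..Max S}" using assms(1) by auto
    show "{..Max S} \<subseteq> S" using assms(2) Max_in[OF assms(1) False] by auto
  qed
  moreover then have "card S = Suc (Max S)" by (metis card_atMost)
  ultimately show ?thesis by (simp add: lessThan_Suc_atMost)
qed simp

lemma mu_set:
  assumes fin: "finite M" and i1: "1 \<le> i"
  shows "{c. i \<le> fM M c} = {..<mu M i}"
proof -
  have finS: "finite {c. i \<le> fM M c}"
  proof -
    have "{c. i \<le> fM M c} \<subseteq> {..Max (insert 0 M)}"
    proof
      fix c assume c: "c \<in> {c. i \<le> fM M c}"
      show "c \<in> {..Max (insert 0 M)}"
      proof (rule ccontr)
        assume "c \<notin> {..Max (insert 0 M)}"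
        then have "Max (insert 0 M) \<le> c" by simp
        moreover have "M \<subseteq> {..Max (insert 0 M)}" using fin by auto
        ultimately have "fM M c = 0" using fM_zero_big[OF fin] by blast
        then show False using c i1 by simp
      qed
    qed
    then show ?thesis using finite_subset by blast
  qed
  show ?thesis unfolding mu_def
    by (rule down_closed_card[OF finS]) (use fM_antimono[OF fin] in \<open>fastforce\<close>)
qed

lemma mu_in_M:
  assumes fin: "finite M" and i1: "1 \<le> i" and i0: "i \<le> fM M 0"
  shows "mu M i \<in> M"
proof -
  let ?m = "mu M i"
  have S: "{c. i \<le> fM M c} = {..<?m}" using mu_set[OF fin i1] .
  have "0 \<in> {c. i \<le> fM M c}" using i0 by simp
  then have m1: "1 \<le> ?m" using S by auto
  have "?m - 1 \<in> {c. i \<le> fM M c}" using S m1 by auto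
  then have a: "i \<le> fM M (?m - 1)" by simp
  have "?m \<notin> {c. i \<le> fM M c}" using S by auto
  then have b: "fM M ?m < i" by simp
  have "fM M (?m - 1) = fM M ?m + (if ?m \<in> M then 1 else 0)" using fM_Suc[OF fin, of "?m - 1"] m1 by simp
  then show ?thesis using a b by (auto split: if_splits)
qed

lemma mu_surj:
  assumes fin: "finite M" and nz: "0 \<notin> M" and y: "y \<in> M"
  shows "1 \<le> fM M (y - 1)" "fM M (y - 1) \<le> fM M 0" "mu M (fM M (y - 1)) = y"
proof -
  have y1: "1 \<le> y" using y nz by (metis less_one not_le)
  have fy: "fM M (y - 1) = fM M y + 1" using fM_Suc[OF fin, of "y - 1"] y y1 by simp
  show "1 \<le> fM M (y - 1)" using fy by simp
  show "fM M (y - 1) \<le> fM M 0" using fM_antimono[OF fin] by simp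
  have "{c. fM M (y - 1) \<le> fM M c} = {..<y}"
  proof (intro equalityI subsetI)
    fix c assume "c \<in> {c. fM M (y - 1) \<le> fM M c}"
    then have h: "fM M (y - 1) \<le> fM M c" by simp
    show "c \<in> {..<y}"
    proof (rule ccontr)
      assume "c \<notin> {..<y}"
      then have "fM M c \<le> fM M y" using fM_antimono[OF fin] by simp
      then show False using h fy by simp
    qed
  next
    fix c assume "c \<in> {..<y}"
    then have "c \<le> y - 1" by simp
    then show "c \<in> {c. fM M (y - 1) \<le> fM M c}" using fM_antimono[OF fin] by simp
  qed
  then show "mu M (fM M (y - 1)) = y" unfolding mu_def by simp
qed

lemma row_DM:
  assumes fin: "finite M" and i1: "1 \<le> i" and i0: "i \<le> fM M 0"
  shows "row_len (DM M) i = (i - 1) + mu M i"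
proof -
  let ?f = "fM M"
  have "{j. (i,j) \<in> DM M} = {1..<i} \<union> (\<lambda>c. c + i) ` {c. i \<le> ?f c}"
  proof (intro equalityI subsetI)
    fix j assume "j \<in> {j. (i,j) \<in> DM M}"
    then have j: "(i,j) \<in> Dg ?f" unfolding DM_def by simp
    show "j \<in> {1..<i} \<union> (\<lambda>c. c + i) ` {c. i \<le> ?f c}"
    proof (cases "i \<le> j")
      case True
      then have "i \<le> ?f (j - i)" using j unfolding Dg_def by auto
      moreover have "j = (j - i) + i" using True by simp
      ultimately show ?thesis by blast
    next
      case False
      then show ?thesis using j unfolding Dg_def by auto
    qed
  next
    fix j assume j: "j \<in> {1..<i} \<union> (\<lambda>c. c + i) ` {c. i \<le> ?f c}"
    show "j \<in> {j. (i,j) \<in> DM M}"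
    proof (cases "j < i")
      case True
      then have "1 \<le> j" using j by auto
      have "?f 0 \<le> ?f (0 + (i - j)) + (i - j)" using fM_unit[OF fin] .
      then have "j \<le> ?f (i - j)" using i0 True by simp
      then show ?thesis using True \<open>1 \<le> j\<close> unfolding DM_def Dg_def by auto
    next
      case False
      then obtain c where "j = c + i" "i \<le> ?f c" using j by auto
      then show ?thesis using i1 unfolding DM_def Dg_def by auto
    qed
  qed
  moreover have "card ({1..<i} \<union> (\<lambda>c. c + i) ` {c. i \<le> ?f c}) = (i - 1) + mu M i"
  proof -
    have "card ((\<lambda>c. c + i) ` {c. i \<le> ?f c}) = mu M i" unfolding mu_def by (intro card_image) (auto intro: inj_onI)
    moreover have "finite {c. i \<le> ?f c}" using mu_set[OF fin i1] by simp
    ultimately show ?thesis by (subst card_Un_disjoint) auto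
  qed
  ultimately show ?thesis unfolding row_len_def by simp
qed

lemma row_DM_big:
  assumes fin: "finite M" and i: "fM M 0 < i"
  shows "row_len (DM M) i < i"
proof -
  have "{j. (i,j) \<in> DM M} \<subseteq> {1..<i}"
  proof
    fix j assume "j \<in> {j. (i,j) \<in> DM M}"
    then have j: "(i,j) \<in> Dg (fM M)" unfolding DM_def by simp
    show "j \<in> {1..<i}"
    proof (cases "i \<le> j")
      case True
      then have "i \<le> fM M (j - i)" using j unfolding Dg_def by auto
      moreover have "fM M (j - i) \<le> fM M 0" using fM_antimono[OF fin] by simp
      ultimately show ?thesis using i by simp
    next
      case False then show ?thesis using j unfolding Dg_def by auto
    qed
  qed
  then have "row_len (DM M) i \<le> card {1..<i}" unfolding row_len_def by (intro card_mono) auto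
  then show ?thesis using i by simp
qed

lemma col_eq_row: "self_conjugate D \<Longrightarrow> col_len D j = row_len D j"
proof -
  assume "self_conjugate D"
  then have "{i. (i,j) \<in> D} = {i. (j,i) \<in> D}" unfolding self_conjugate_def conjugate_def by blast
  then show ?thesis unfolding col_len_def row_len_def by simp
qed

lemma kdiag_DM:
  assumes fin: "finite M"
  shows "kdiag (DM M) = fM M 0"
proof -
  have "{i. 1 \<le> i \<and> i \<le> row_len (DM M) i} = {1..fM M 0}"
  proof (intro equalityI subsetI)
    fix i assume "i \<in> {i. 1 \<le> i \<and> i \<le> row_len (DM M) i}"
    then show "i \<in> {1..fM M 0}" using row_DM_big[OF fin, of i] by (auto simp: not_le[symmetric])
  next
    fix i assume i: "i \<in> {1..fM M 0}"
    have "0 < mu M i"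
    proof -
      have "0 \<in> {c. i \<le> fM M c}" using i by simp
      then show ?thesis using mu_set[OF fin, of i] i by auto
    qed
    then show "i \<in> {i. 1 \<le> i \<and> i \<le> row_len (DM M) i}" using row_DM[OF fin, of i] i by auto
  qed
  moreover have "{0} \<union> {1..fM M 0} = {..fM M 0}" by auto
  ultimately have "kdiag (DM M) = Max {..fM M 0}" unfolding kdiag_def by simp
  also have "\<dots> = fM M 0" by (rule Max_eqI) auto
  finally show ?thesis .
qed

lemma BG_DM:
  assumes fin: "finite M" and nz: "0 \<notin> M"
  shows "BG_partition p (DM M) \<longleftrightarrow> (\<forall>y\<in>M. \<not> int p dvd 2 * int y - 1)"
proof -
  have hk: "hook (DM M) i i = 2 * int (mu M i) - 1" if "1 \<le> i" "i \<le> fM M 0" for i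
    unfolding hook_def col_eq_row[OF sc_DM] row_DM[OF fin that] using that by simp
  show ?thesis
  proof
    assume bg: "BG_partition p (DM M)"
    show "\<forall>y\<in>M. \<not> int p dvd 2 * int y - 1"
    proof
      fix y assume y: "y \<in> M"
      note ms = mu_surj[OF fin nz y]
      have "\<not> int p dvd hook (DM M) (fM M (y - 1)) (fM M (y - 1))"
        using bg ms(1,2) kdiag_DM[OF fin] unfolding BG_partition_def by auto
      then show "\<not> int p dvd 2 * int y - 1" using hk[OF ms(1,2)] ms(3) by simp
    qed
  next
    assume h: "\<forall>y\<in>M. \<not> int p dvd 2 * int y - 1"
    show "BG_partition p (DM M)"
      unfolding BG_partition_def kdiag_DM[OF fin]
      using sc_DM hk h mu_in_M[OF fin] by auto
  qed
qed



lemma Fm_empty: "Fm p {} = {}" and Cc_empty: "Cc p {} = {}"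
  unfolding Fm_def Cc_def Ch_def by auto

lemma a_mod2_DM:
  assumes fin: "finite M" and nz: "0 \<notin> M" and p0: "0 < p"
  shows "a_star (DM M) p mod 2 = (if 0 \<in> Cc p M then 1 else 0)"
  using eps_star_DM[OF assms] unfolding eps_star_def .

lemma lam1_iff:
  assumes fin: "finite M" and nz: "0 \<notin> M" and p0: "0 < p" and finN: "finite N" and nzN: "0 \<notin> N"
  shows "lam1_star (DM M) p = DM N \<longleftrightarrow> Fm p M = N"
  using lam1_DM[OF assms(1-3)] DM_inj[OF Fm_finite[OF fin] finN Fm_nz[OF fin nz] nzN] by auto

lemma mod_sub_cancel_int: "((a::int) - e) mod n = (b - e) mod n \<Longrightarrow> a mod n = b mod n"
  using mod_add_cong[of "a - e" n "b - e" e e] by simp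

theorem lemma3p11:
  fixes p \<epsilon> :: nat and m :: int and T :: diagram
  assumes "prime p" and "odd p"
    and "young T" and "self_conjugate T"
    and "\<epsilon> \<in> {0, 1}"
    and "0 \<le> m" and "m < int p"
    and "\<epsilon> = 0 \<Longrightarrow> m = 0"
  shows "(\<exists>!D. young D \<and> self_conjugate D \<and> a_star D p mod 2 = \<epsilon> \<and>
              [int (r_star D p) - int (eps_star D p) = m] (mod int p) \<and>
              lam1_star D p = T)
         \<and> (BG_partition p T \<and> (\<epsilon> = 1 \<longrightarrow> \<not> int p dvd 2 * m + 1) \<longrightarrow>
              (\<forall>D. young D \<and> self_conjugate D \<and> a_star D p mod 2 = \<epsilon> \<and>
                   [int (r_star D p) - int (eps_star D p) = m] (mod int p) \<and>
                   lam1_star D p = T \<longrightarrow> BG_partition p D))"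
proof -
  have p0: "0 < p" using assms(1) prime_gt_0_nat by blast
  obtain N where N: "finite N" "0 \<notin> N" "T = DM N" using repr[OF assms(3,4)] by blast
  define Cond where "Cond D \<longleftrightarrow> young D \<and> self_conjugate D \<and> a_star D p mod 2 = \<epsilon> \<and>
              [int (r_star D p) - int (eps_star D p) = m] (mod int p) \<and> lam1_star D p = T" for D
  have condM: "Cond (DM M) \<longleftrightarrow> (if 0 \<in> Cc p M then 1 else 0) = \<epsilon> \<and>
      (int (card (Cc p M)) - (if 0 \<in> Cc p M then 1 else 0)) mod int p = m mod int p \<and> Fm p M = N"
    if fin: "finite M" and nz: "0 \<notin> M" for M
    unfolding Cond_def using young_DM[OF fin] sc_DM a_mod2_DM[OF fin nz p0] r_star_DM[OF fin nz p0]
      eps_star_DM[OF fin nz p0] lam1_iff[OF fin nz p0 N(1,2)] N(3)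
    by (auto simp: cong_def)
  have condD: "\<exists>M. finite M \<and> 0 \<notin> M \<and> D = DM M" if "Cond D" for D
    using repr that unfolding Cond_def by blast
  have ex: "\<exists>D. Cond D"
  proof (cases "\<epsilon> = 0")
    case True
    then have m0: "m = 0" using assms(8) by simp
    show ?thesis
    proof (cases "N = {}")
      case True
      have "Cond (DM {})" using condM[of "{}"] True \<open>\<epsilon> = 0\<close> m0 by (simp add: Fm_empty Cc_empty)
      then show ?thesis by blast
    next
      case False
      define x0 where "x0 = Min N + p"
      have x1: "1 \<le> x0" using p0 unfolding x0_def by simp
      note E = existM[OF N(1,2) p0 x1, of]
      have H: "x0 \<le> p \<or> (N \<noteq> {} \<and> x0 = Min N + p)" using False x0_def by simp
      let ?M = "Gm p N x0"
      have E1: "finite ?M" "0 \<notin> ?M" "?M \<noteq> {}" "Fm p ?M = N" "Min (Ch p ?M) = x0"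
        using existM[OF N(1,2) p0 x1 H] by auto
      have Nmin: "1 \<le> Min N" using False N(1,2) by (metis Min_in less_one not_le)
      have gt: "p < Min (Ch p ?M)" using E1(5) Nmin unfolding x0_def by simp
      have c0: "0 \<notin> Cc p ?M" using Cc_zero[OF E1(1,2)] gt by simp
      have "card (Cc p ?M) = p * (card (Ch p ?M) - 1) + p" using Cc_card[OF E1(1,3,2) p0] gt by simp
      then have "int (card (Cc p ?M)) mod int p = 0" by simp
      then have "Cond (DM ?M)" using condM[OF E1(1,2)] c0 E1(4) \<open>\<epsilon> = 0\<close> m0 by simp
      then show ?thesis by blast
    qed
  next
    case False
    then have e1: "\<epsilon> = 1" using assms(5) by simp
    define x0 where "x0 = nat m + 1"
    have x1: "1 \<le> x0" unfolding x0_def by simp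
    have xp: "x0 \<le> p" unfolding x0_def using assms(6,7) by simp
    let ?M = "Gm p N x0"
    have E1: "finite ?M" "0 \<notin> ?M" "?M \<noteq> {}" "Fm p ?M = N" "Min (Ch p ?M) = x0"
      using existM[OF N(1,2) p0 x1] xp by auto
    have c0: "0 \<in> Cc p ?M" using Cc_zero[OF E1(1,2)] E1(3,5) xp by simp
    have "card (Cc p ?M) = p * (card (Ch p ?M) - 1) + x0" using Cc_card[OF E1(1,3,2) p0] E1(5) xp by simp
    then have "int (card (Cc p ?M)) - 1 = int p * int (card (Ch p ?M) - 1) + m"
      unfolding x0_def using assms(6) by simp
    then have "(int (card (Cc p ?M)) - 1) mod int p = m mod int p" by simp
    then have "Cond (DM ?M)" using condM[OF E1(1,2)] c0 E1(4) e1 by simp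
    then show ?thesis by blast
  qed
  have un: "D1 = D2" if cD1: "Cond D1" and cD2: "Cond D2" for D1 D2
  proof -
    obtain M1 where M1: "finite M1" "0 \<notin> M1" "D1 = DM M1" using condD[OF cD1] by blast
    obtain M2 where M2: "finite M2" "0 \<notin> M2" "D2 = DM M2" using condD[OF cD2] by blast
    have c1: "(if 0 \<in> Cc p M1 then 1 else 0) = \<epsilon>"
      "(int (card (Cc p M1)) - (if 0 \<in> Cc p M1 then 1 else 0)) mod int p = m mod int p" "Fm p M1 = N"
      using condM[OF M1(1,2)] cD1 M1(3) by auto
    have c2: "(if 0 \<in> Cc p M2 then 1 else 0) = \<epsilon>"
      "(int (card (Cc p M2)) - (if 0 \<in> Cc p M2 then 1 else 0)) mod int p = m mod int p" "Fm p M2 = N"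
      using condM[OF M2(1,2)] cD2 M2(3) by auto
    have z: "0 \<in> Cc p M1 \<longleftrightarrow> 0 \<in> Cc p M2" using c1(1) c2(1) by (auto split: if_splits)
    have "(int (card (Cc p M1)) - (if 0 \<in> Cc p M1 then 1 else 0)) mod int p =
          (int (card (Cc p M2)) - (if 0 \<in> Cc p M1 then 1 else 0)) mod int p" using c1(2) c2(2) z by simp
    then have "int (card (Cc p M1)) mod int p = int (card (Cc p M2)) mod int p"
      by (rule mod_sub_cancel_int)
    then have "card (Cc p M1) mod p = card (Cc p M2) mod p" by (metis of_nat_eq_iff zmod_int)
    then have "M1 = M2" using uniqM[OF M1(1) M2(1) M1(2) M2(2) p0] c1(3) c2(3) z by simp
    then show ?thesis using M1 M2 by simp
  qed
  have part1: "\<exists>!D. Cond D" using ex un by blast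
  have part2: "BG_partition p D" if bgT: "BG_partition p T" and hm: "\<epsilon> = 1 \<longrightarrow> \<not> int p dvd 2 * m + 1"
    and cD: "Cond D" for D
  proof -
    obtain M where M: "finite M" "0 \<notin> M" "D = DM M" using condD[OF cD] by blast
    have c: "(if 0 \<in> Cc p M then 1 else 0) = \<epsilon>"
      "(int (card (Cc p M)) - (if 0 \<in> Cc p M then 1 else 0)) mod int p = m mod int p" "Fm p M = N"
      using condM[OF M(1,2)] cD M(3) by auto
    have bgN: "\<forall>y\<in>N. \<not> int p dvd 2 * int y - 1" using bgT BG_DM[OF N(1,2)] N(3) by simp
    have "\<forall>y\<in>M. \<not> int p dvd 2 * int y - 1"
    proof
      fix y assume y: "y \<in> M"
      show "\<not> int p dvd 2 * int y - 1"
      proof (cases "y \<in> Ch p M")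
        case False
        then have "y \<in> N" using y c(3) unfolding Fm_def by blast
        then show ?thesis using bgN by blast
      next
        case yC: True
        show ?thesis
        proof (cases "p < y")
          case True
          then have "y - p \<in> N" using yC c(3) unfolding Fm_def by blast
          then have nd: "\<not> int p dvd 2 * int (y - p) - 1" using bgN by blast
          have "2 * int y - 1 = (2 * int (y - p) - 1) + int p * 2" using True by simp
          then show ?thesis using nd by (metis dvd_add_left_iff dvd_triv_left)
        next
          case False
          have ne: "M \<noteq> {}" using y by blast
          have ymin: "y = Min (Ch p M)" using Ch_nonmin_gt[OF M(1,2) yC] False by blast
          have c0: "0 \<in> Cc p M" using Cc_zero[OF M(1,2)] ne ymin False by simp
          then have e1: "\<epsilon> = 1" using c(1) by simp
          have "card (Cc p M) mod p = y mod p" using Min_Ch_small(3)[OF M(1) ne M(2) p0 c0] ymin by simp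
          then have "int (card (Cc p M)) mod int p = int y mod int p" by (metis zmod_int)
          then have "(int y - 1) mod int p = (int (card (Cc p M)) - 1) mod int p"
            using mod_diff_cong[of "int y" "int p" "int (card (Cc p M))" 1 1] by simp
          then have "(int y - 1) mod int p = m mod int p" using c(2) c0 by simp
          then have "int p dvd (int y - 1) - m" by (simp add: mod_eq_dvd_iff)
          then have "int p dvd 2 * ((int y - 1) - m)" by (rule dvd_mult)
          moreover have "2 * ((int y - 1) - m) = (2 * int y - 1) - (2 * m + 1)" by simp
          ultimately have d: "int p dvd (2 * int y - 1) - (2 * m + 1)" by metis
          show ?thesis
          proof
            assume "int p dvd 2 * int y - 1"
            then have "int p dvd (2 * int y - 1) - ((2 * int y - 1) - (2 * m + 1))" using d by (rule dvd_diff)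
            then have "int p dvd 2 * m + 1" by (simp add: add.commute)
            then show False using hm e1 by simp
          qed
        qed
      qed
    qed
    then show ?thesis using BG_DM[OF M(1,2)] M(3) by simp
  qed
  show ?thesis using part1 part2 unfolding Cond_def by blast
qed


end
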